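(* Let $\delta\in(0,1)$, $f\in X^{\log}_{3+\delta}(\mathbb R^2)^2$ and $F\in X_{2+\delta}(\mathbb R^2)^{2\times2}$. Let $\Gamma^S$ be the $2\times2$ matrix function $$\Gamma^S_{ij}(x):=\frac{1}{4\pi}\Big(\delta_{ij}\log\big(|x|^{-1}\big)+\frac{x_ix_j}{|x|^2}\Big).$$ Then for $i=1,2$, $$\Gamma^S_{il}*f_l(x)=\Big[\int_{\mathbb R^2}f(y)\,dy\Big]_l\Gamma^S_{il}(x)-\Big[\int_{\mathbb R^2}f(y)\otimes y\,dy\Big]_{lj}\partial_j\Gamma^S_{il}(x)+r_i(x),\qquad \sup_{|x|\ge e}|x|^{1+\delta}|r_i(x)|\le C\|f\|_{X^{\log}_{3+\delta}},$$ and $$\partial_j\Gamma^S_{il}*F_{lj}(x)=\Big[\int_{\mathbb R^2}F(y)\,dy\Big]_{lj}\partial_j\Gamma^S_{il}(x)+R_i(x),\qquad \sup_{|x|\ge e}|x|^{1+\delta}|R_i(x)|\le C'\|F\|_{X_{2+\delta}},$$ for constants $C,C'>0$ (independent of $f,F$).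
   Context: Summation over repeated indices is used; $*$ is convolution on $\mathbb R^2$ and $(f(y)\otimes y)_{lj}=f_l(y)y_j$. For $\alpha>0$, $X_\alpha(\mathbb R^2)$ is the space of $f\in L^\infty(\mathbb R^2)$ with $\|f\|_{X_\alpha}:=\sup_{x}(1+|x|)^\alpha|f(x)|<\infty$, and $X^{\log}_\alpha(\mathbb R^2)$ is the space of $f\in L^\infty(\mathbb R^2)$ with $\|f\|_{X^{\log}_\alpha}:=\sup_x(1+|x|)^\alpha\log(e+|x|)|f(x)|<\infty$. $\Gamma^S$ is the fundamental solution of the steady Stokes system $-\Delta v+\nabla q=f$, $\operatorname{div}v=0$ in $\mathbb R^2$. *)

theory Defs
  imports "HOL-Analysis.Analysis"
begin

definition GammaS :: "2 \<Rightarrow> 2 \<Rightarrow> real^2 \<Rightarrow> real" where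
  "GammaS i j x = (1 / (4 * pi)) *
     ((if i = j then 1 else 0) * ln (1 / norm x) + (x $ i) * (x $ j) / (norm x)^2)"

definition partial :: "2 \<Rightarrow> (real^2 \<Rightarrow> real) \<Rightarrow> real^2 \<Rightarrow> real" where
  "partial j g x = deriv (\<lambda>t. g (x + t *\<^sub>R axis j 1)) 0"

definition conv :: "(real^2 \<Rightarrow> real) \<Rightarrow> (real^2 \<Rightarrow> real) \<Rightarrow> real^2 \<Rightarrow> real" where
  "conv g h x = (LINT y|lborel. g (x - y) * h y)"

definition X_norm :: "real \<Rightarrow> (real^2 \<Rightarrow> 'a::real_normed_vector) \<Rightarrow> real" where
  "X_norm \<alpha> f = (SUP x. (1 + norm x) powr \<alpha> * norm (f x))"

definition X_space :: "real \<Rightarrow> (real^2 \<Rightarrow> 'a::{real_normed_vector, second_countable_topology}) set" where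
  "X_space \<alpha> = {f. f \<in> borel_measurable lborel \<and>
      bdd_above (range (\<lambda>x. (1 + norm x) powr \<alpha> * norm (f x)))}"

definition Xlog_norm :: "real \<Rightarrow> (real^2 \<Rightarrow> 'a::real_normed_vector) \<Rightarrow> real" where
  "Xlog_norm \<alpha> f = (SUP x. (1 + norm x) powr \<alpha> * ln (exp 1 + norm x) * norm (f x))"

definition Xlog_space :: "real \<Rightarrow> (real^2 \<Rightarrow> 'a::{real_normed_vector, second_countable_topology}) set" where
  "Xlog_space \<alpha> = {f. f \<in> borel_measurable lborel \<and>
      bdd_above (range (\<lambda>x. (1 + norm x) powr \<alpha> * ln (exp 1 + norm x) * norm (f x)))}"

end

theory Submission
  imports Defs
begin

definition cR :: real where "cR = unit_ball_vol 2"

lemma cR_pos: "cR > 0" by (simp add: cR_def)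

lemma emeasure_ball2: "r \<ge> 0 \<Longrightarrow> emeasure lborel (ball (0::real^2) r) = ennreal (cR * r^2)"
  using emeasure_ball[of r "0::real^2"] by (simp add: cR_def)

lemma distr_negnorm:
  "distr (lborel :: (real^2) measure) borel (\<lambda>y. - norm y)
    = density lborel (\<lambda>s. ennreal (2 * cR * (- s)) * indicator {..0} s)"
proof (rule measure_eqI_lessThan)
  show "sets (distr (lborel :: (real^2) measure) borel (\<lambda>y. - norm y)) = sets borel" by simp
  show "sets (density lborel (\<lambda>s. ennreal (2 * cR * (- s)) * indicator {..0} s)) = sets borel" by simp
  have E: "emeasure (distr (lborel :: (real^2) measure) borel (\<lambda>y. - norm y)) {x<..}
      = (if x < 0 then ennreal (cR * x^2) else 0)" for x
  proof -
    have "emeasure (distr (lborel :: (real^2) measure) borel (\<lambda>y. - norm y)) {x<..}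
        = emeasure lborel ((\<lambda>y::real^2. - norm y) -` {x<..} \<inter> space lborel)"
      by (rule emeasure_distr) auto
    also have "(\<lambda>y::real^2. - norm y) -` {x<..} \<inter> space lborel = ball 0 (-x)"
      by (auto simp: dist_norm)
    also have "emeasure lborel (ball (0::real^2) (-x)) = (if x < 0 then ennreal (cR * x^2) else 0)"
      using emeasure_ball2[of "-x"] by (auto simp: ball_empty)
    finally show ?thesis .
  qed
  show "emeasure (distr (lborel :: (real^2) measure) borel (\<lambda>y. - norm y)) {x<..} < \<infinity>" for x
    unfolding E by auto
  show "emeasure (distr (lborel :: (real^2) measure) borel (\<lambda>y. - norm y)) {x<..} =
        emeasure (density lborel (\<lambda>s. ennreal (2 * cR * (- s)) * indicator {..0} s)) {x<..}" for x
  proof -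
    have "emeasure (density lborel (\<lambda>s. ennreal (2 * cR * (- s)) * indicator {..0} s)) {x<..}
       = (\<integral>\<^sup>+s. ennreal (2 * cR * (- s)) * indicator {..0} s * indicator {x<..} s \<partial>lborel)"
      by (subst emeasure_density) (auto intro!: nn_integral_cong simp: mult.commute)
    also have "\<dots> = (if x < 0 then ennreal (cR * x^2) else 0)"
    proof (cases "x < 0")
      case True
      have "(\<integral>\<^sup>+s. ennreal (2 * cR * (- s)) * indicator {..0} s * indicator {x<..} s \<partial>lborel)
          = (\<integral>\<^sup>+s. ennreal (2 * cR * (- s)) * indicator {x..0} s \<partial>lborel)"
        using AE_lborel_singleton[of x]
        by (intro nn_integral_cong_AE) (auto elim!: eventually_mono split: split_indicator)
      also have "\<dots> = ennreal ((- cR * 0^2) - (- cR * x^2))"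
        using True cR_pos
        by (intro nn_integral_FTC_Icc) (auto intro!: derivative_eq_intros simp: power2_eq_square mult_nonpos_nonneg)
      finally show ?thesis using True by simp
    next
      case False
      then have "\<And>s. indicator {..0} s * indicator {x<..} s = (0::ennreal)"
        by (auto split: split_indicator)
      then have "\<And>s. ennreal (2 * cR * (- s)) * indicator {..0} s * indicator {x<..} s = (0::ennreal)"
        by (metis mult.assoc mult_zero_right)
      then show ?thesis using False by (simp only: nn_integral_0_iff_AE) simp
    qed
    finally show ?thesis using E by simp
  qed
qed

lemma radial:
  fixes \<phi> :: "real \<Rightarrow> ennreal"
  assumes [measurable]: "\<phi> \<in> borel_measurable borel"
  shows "(\<integral>\<^sup>+y. \<phi> (norm (y::real^2)) \<partial>lborel) =
         (\<integral>\<^sup>+r. \<phi> r * ennreal (2 * cR * r) * indicator {0..} r \<partial>lborel)"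
proof -
  have "(\<integral>\<^sup>+y. \<phi> (norm (y::real^2)) \<partial>lborel) = (\<integral>\<^sup>+y. \<phi> (- (- norm (y::real^2))) \<partial>lborel)"
    by simp
  also have "\<dots> = (\<integral>\<^sup>+s. \<phi> (- s) \<partial>distr (lborel :: (real^2) measure) borel (\<lambda>y. - norm y))"
    by (subst nn_integral_distr) auto
  also have "\<dots> = (\<integral>\<^sup>+s. ennreal (2 * cR * (- s)) * indicator {..0} s * \<phi> (- s) \<partial>lborel)"
    unfolding distr_negnorm by (subst nn_integral_density) auto
  also have "\<dots> = (\<integral>\<^sup>+s. ennreal (2 * cR * (- s)) * indicator {..0} s * \<phi> (- s) \<partial>distr lborel borel uminus)"
    by (simp add: lborel_distr_uminus)
  also have "\<dots> = (\<integral>\<^sup>+r. ennreal (2 * cR * r) * indicator {..0} (-r) * \<phi> r \<partial>lborel)"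
    by (subst nn_integral_distr) auto
  also have "\<dots> = (\<integral>\<^sup>+r. \<phi> r * ennreal (2 * cR * r) * indicator {0..} r \<partial>lborel)"
    by (intro nn_integral_cong) (auto simp: mult.commute split: split_indicator)
  finally show ?thesis .
qed

lemma translate:
  fixes g :: "real^2 \<Rightarrow> ennreal"
  assumes [measurable]: "g \<in> borel_measurable borel"
  shows "(\<integral>\<^sup>+y. g (x - y) \<partial>lborel) = (\<integral>\<^sup>+z. g z \<partial>lborel)"
proof -
  have "(lborel::(real^2) measure) = distr lborel borel (\<lambda>z. x + (-1) *\<^sub>R z)"
    using lborel_affine[of "-1::real" x] by (simp add: density_1)
  then have "(\<integral>\<^sup>+z. g z \<partial>lborel) = (\<integral>\<^sup>+z. g z \<partial>distr lborel borel (\<lambda>z. x + (-1) *\<^sub>R z))"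
    by simp
  also have "\<dots> = (\<integral>\<^sup>+y. g (x - y) \<partial>lborel)"
    by (subst nn_integral_distr) auto
  finally show ?thesis ..
qed

lemma deriv_1p_powr: "r > -1 \<Longrightarrow> ((\<lambda>r. (1 + r) powr a) has_real_derivative a * (1 + r) powr (a - 1)) (at r)"
proof -
  assume r: "r > -1"
  have "((\<lambda>r. (1 + r) powr a) has_real_derivative a * (1 + r) powr (a - 1) * 1) (at r)"
    using r by (intro DERIV_chain2[where g="\<lambda>r. 1 + r", OF has_real_derivative_powr]) (auto intro!: derivative_eq_intros)
  then show ?thesis by simp
qed

lemma deriv_c_1p_powr: "r > -1 \<Longrightarrow> E = c * (a * (1 + r) powr (a - 1)) \<Longrightarrow>
   ((\<lambda>r. c * (1 + r) powr a) has_real_derivative E) (at r)"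
  using DERIV_cmult[OF deriv_1p_powr[of r a], where c=c] by simp

lemma powr_1p_mult: "(r::real) \<ge> 0 \<Longrightarrow> (1 + r) * (1 + r) powr a = (1 + r) powr (1 + a)"
  by (simp add: powr_add)

lemma powr_shift_le: "(r::real) \<ge> 0 \<Longrightarrow> r * (1 + r) powr (-s) \<le> (1 + r) powr (1 - s)"
proof -
  assume r: "r \<ge> 0"
  have "r * (1 + r) powr (-s) \<le> (1 + r) * (1 + r) powr (-s)"
    using r by (intro mult_right_mono) auto
  also have "\<dots> = (1 + r) powr (1 - s)"
    using powr_1p_mult[OF r, of "-s"] by simp
  finally show ?thesis .
qed

lemma L_near:
  assumes d: "0 < \<delta>" "\<delta> < 1" and R: "R \<ge> 0"
  shows "(\<integral>\<^sup>+y. ennreal (indicator {..R} (norm (y::real^2)) * norm y * (1 + norm y) powr (-(2+\<delta>))) \<partial>lborel)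
         \<le> ennreal (2 * cR * (1 + R) powr (1 - \<delta>) / (1 - \<delta>))"
proof -
  have "(\<integral>\<^sup>+y. ennreal (indicator {..R} (norm (y::real^2)) * norm y * (1 + norm y) powr (-(2+\<delta>))) \<partial>lborel)
      = (\<integral>\<^sup>+r. ennreal (indicator {..R} r * r * (1 + r) powr (-(2+\<delta>))) * ennreal (2 * cR * r) * indicator {0..} r \<partial>lborel)"
    by (rule radial[where \<phi>="\<lambda>r. ennreal (indicator {..R} r * r * (1 + r) powr (-(2+\<delta>)))"]) measurable
  also have "\<dots> \<le> (\<integral>\<^sup>+r. ennreal (2 * cR * (1 + r) powr (-\<delta>)) * indicator {0..R} r \<partial>lborel)"
  proof (intro nn_integral_mono)
    fix r :: real
    show "ennreal (indicator {..R} r * r * (1 + r) powr (-(2+\<delta>))) * ennreal (2 * cR * r) * indicator {0..} r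
          \<le> ennreal (2 * cR * (1 + r) powr (-\<delta>)) * indicator {0..R} r"
    proof (cases "0 \<le> r \<and> r \<le> R")
      case True
      have "r * (r * (1 + r) powr (-(2+\<delta>))) \<le> (1 + r) powr (-\<delta>)"
      proof -
        have "r * (1 + r) powr (-(2+\<delta>)) \<le> (1 + r) powr (1 - (2 + \<delta>))"
          using powr_shift_le[of r "2+\<delta>"] True by simp
        then have "r * (r * (1 + r) powr (-(2+\<delta>))) \<le> r * (1 + r) powr (-(1 + \<delta>))"
          using True by (intro mult_left_mono) (auto simp: algebra_simps)
        also have "\<dots> \<le> (1 + r) powr (1 - (1 + \<delta>))"
          using powr_shift_le[of r "1+\<delta>"] True by simp
        finally show ?thesis by simp
      qed
      then have "indicator {..R} r * r * (1 + r) powr (-(2+\<delta>)) * (2 * cR * r) \<le> 2 * cR * (1 + r) powr (-\<delta>)"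
        using True cR_pos by (simp add: algebra_simps)
      then show ?thesis using True cR_pos
        by (simp add: ennreal_mult''[symmetric] indicator_def)
    next
      case False
      then show ?thesis by (auto simp: indicator_def)
    qed
  qed
  also have "\<dots> = ennreal (2 * cR / (1 - \<delta>) * (1 + R) powr (1 - \<delta>) - 2 * cR / (1 - \<delta>) * (1 + 0) powr (1 - \<delta>))"
    using d R cR_pos
    by (intro nn_integral_FTC_Icc deriv_c_1p_powr) auto
  also have "\<dots> \<le> ennreal (2 * cR * (1 + R) powr (1 - \<delta>) / (1 - \<delta>))"
  proof (intro ennreal_leI)
    have "2 * cR / (1 - \<delta>) > 0" using d cR_pos by simp
    then show "2 * cR / (1 - \<delta>) * (1 + R) powr (1 - \<delta>) - 2 * cR / (1 - \<delta>) * (1 + 0) powr (1 - \<delta>)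
        \<le> 2 * cR * (1 + R) powr (1 - \<delta>) / (1 - \<delta>)" by simp
  qed
  finally show ?thesis .
qed

lemma L_tail:
  assumes s: "s > 2" and R: "R \<ge> 0"
  shows "(\<integral>\<^sup>+y. ennreal (indicator {R..} (norm (y::real^2)) * (1 + norm y) powr (-s)) \<partial>lborel)
         \<le> ennreal (2 * cR * (1 + R) powr (2 - s) / (s - 2))"
proof -
  have "(\<integral>\<^sup>+y. ennreal (indicator {R..} (norm (y::real^2)) * (1 + norm y) powr (-s)) \<partial>lborel)
      = (\<integral>\<^sup>+r. ennreal (indicator {R..} r * (1 + r) powr (-s)) * ennreal (2 * cR * r) * indicator {0..} r \<partial>lborel)"
    by (rule radial[where \<phi>="\<lambda>r. ennreal (indicator {R..} r * (1 + r) powr (-s))"]) measurable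
  also have "\<dots> \<le> (\<integral>\<^sup>+r. ennreal (2 * cR * (1 + r) powr (1 - s)) * indicator {R..} r \<partial>lborel)"
  proof (intro nn_integral_mono)
    fix r :: real
    show "ennreal (indicator {R..} r * (1 + r) powr (-s)) * ennreal (2 * cR * r) * indicator {0..} r
          \<le> ennreal (2 * cR * (1 + r) powr (1 - s)) * indicator {R..} r"
    proof (cases "R \<le> r")
      case True
      then have r: "r \<ge> 0" using R by simp
      have "(1 + r) powr (-s) * (2 * cR * r) = 2 * cR * (r * (1 + r) powr (-s))" by simp
      also have "\<dots> \<le> 2 * cR * (1 + r) powr (1 - s)"
        using powr_shift_le[OF r, of s] cR_pos by simp
      finally show ?thesis using True r cR_pos
        by (simp add: ennreal_mult''[symmetric] indicator_def)
    next
      case False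
      then show ?thesis by (auto simp: indicator_def)
    qed
  qed
  also have "\<dots> = ennreal (0 - (- 2 * cR / (s - 2)) * (1 + R) powr (2 - s))"
  proof (rule nn_integral_FTC_atLeast)
    show "(\<lambda>r. 2 * cR * (1 + r) powr (1 - s)) \<in> borel_measurable borel" by measurable
    show "DERIV (\<lambda>r. - 2 * cR / (s - 2) * (1 + r) powr (2 - s)) x :> 2 * cR * (1 + x) powr (1 - s)"
      if "R \<le> x" for x
      using that R s by (intro deriv_c_1p_powr) (auto simp: field_simps)
    show "0 \<le> 2 * cR * (1 + x) powr (1 - s)" for x using cR_pos by simp
    have "((\<lambda>r. (1 + r) powr (2 - s)) \<longlongrightarrow> 0) at_top"
      using s by (intro tendsto_neg_powr filterlim_tendsto_add_at_top[OF tendsto_const filterlim_ident]) auto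
    then show "((\<lambda>r. - 2 * cR / (s - 2) * (1 + r) powr (2 - s)) \<longlongrightarrow> 0) at_top"
      using tendsto_mult_right_zero by blast
  qed
  also have "\<dots> = ennreal (2 * cR * (1 + R) powr (2 - s) / (s - 2))" by simp
  finally show ?thesis .
qed

lemma L_ball:
  assumes R: "R \<ge> 0"
  shows "(\<integral>\<^sup>+z. ennreal (indicator {..<R} (norm (z::real^2)) / norm z) \<partial>lborel) \<le> ennreal (2 * cR * R)"
proof -
  have "(\<integral>\<^sup>+z. ennreal (indicator {..<R} (norm (z::real^2)) / norm z) \<partial>lborel)
      = (\<integral>\<^sup>+r. ennreal (indicator {..<R} r / r) * ennreal (2 * cR * r) * indicator {0..} r \<partial>lborel)"
    by (rule radial[where \<phi>="\<lambda>r. ennreal (indicator {..<R} r / r)"]) measurable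
  also have "\<dots> \<le> (\<integral>\<^sup>+r. ennreal (2 * cR) * indicator {0..R} r \<partial>lborel)"
  proof (intro nn_integral_mono)
    fix r :: real
    show "ennreal (indicator {..<R} r / r) * ennreal (2 * cR * r) * indicator {0..} r
          \<le> ennreal (2 * cR) * indicator {0..R} r"
    proof (cases "0 < r \<and> r < R")
      case True
      then show ?thesis using cR_pos
        by (simp add: ennreal_mult''[symmetric] indicator_def)
    next
      case False
      then show ?thesis by (auto simp: indicator_def)
    qed
  qed
  also have "\<dots> = ennreal (2 * cR * R - 2 * cR * 0)"
    using R cR_pos by (intro nn_integral_FTC_Icc) (auto intro!: derivative_eq_intros)
  finally show ?thesis by simp
qed

lemma L_ball_shift:
  assumes R: "R \<ge> 0"
  shows "(\<integral>\<^sup>+y. ennreal (indicator {..<R} (norm (x - y::real^2)) / norm (x - y)) \<partial>lborel) \<le> ennreal (2 * cR * R)"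
  using L_ball[OF R] translate[where g="\<lambda>z. ennreal (indicator {..<R} (norm (z::real^2)) / norm z)" and x=x]
  by simp

definition dl :: "2 \<Rightarrow> 2 \<Rightarrow> real" where "dl i j = (if i = j then 1 else 0)"

definition dG :: "2 \<Rightarrow> 2 \<Rightarrow> 2 \<Rightarrow> real^2 \<Rightarrow> real" where
  "dG i l j z = (1 / (4 * pi)) * (- dl i l * z$j / (inner z z)
      + (dl i j * z$l + dl l j * z$i) / (inner z z) - 2 * z$i * z$l * z$j / (inner z z)^2)"

lemma Gamma_alt: "GammaS i l z = (1 / (4 * pi)) * (dl i l * (- ln (inner z z) / 2) + z$i * z$l / inner z z)"
proof -
  have q: "inner z z \<ge> 0" by simp
  have "ln (1 / norm z) = - ln (inner z z) / 2"
  proof (cases "z = 0")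
    case True then show ?thesis by simp
  next
    case False
    then have "norm z > 0" by simp
    then show ?thesis using ln_sqrt[OF q] by (simp add: ln_div norm_eq_sqrt_inner)
  qed
  then show ?thesis unfolding GammaS_def dl_def by (simp add: power2_norm_eq_inner)
qed

lemma vec_line: "(a + s *\<^sub>R v :: real^2) $ k = a$k + s * v$k" by simp

lemma inner_line: "inner (a + s *\<^sub>R v) (a + s *\<^sub>R v :: real^2) = inner a a + 2 * s * inner a v + s^2 * inner v v"
  by (simp add: inner_add_left inner_add_right inner_commute power2_eq_square algebra_simps)

lemma inner_line_v: "inner (a + s *\<^sub>R v) (v :: real^2) = inner a v + s * inner v v"
  by (simp add: inner_add_left)

lemma Gamma_line0:
  assumes a: "a \<noteq> 0"
  shows "((\<lambda>s. GammaS i l (a + s *\<^sub>R v)) has_real_derivative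
    (1 / (4 * pi)) * (- dl i l * inner a v / inner a a + (v$i * a$l + a$i * v$l) / inner a a
       - 2 * a$i * a$l * inner a v / (inner a a)^2)) (at 0)"
proof -
  have q: "inner a a > 0" using a by simp
  have eq: "(\<lambda>s. GammaS i l (a + s *\<^sub>R v)) = (\<lambda>s. (1 / (4 * pi)) * (dl i l * (- ln (inner a a + 2 * s * inner a v + s^2 * inner v v) / 2)
      + (a$i + s * v$i) * (a$l + s * v$l) / (inner a a + 2 * s * inner a v + s^2 * inner v v)))"
    by (simp only: Gamma_alt inner_line vec_line)
  show ?thesis unfolding eq
    using q by (auto intro!: derivative_eq_intros simp: field_simps power2_eq_square)
qed

lemma dG_line0:
  assumes a: "a \<noteq> 0"
  shows "((\<lambda>s. dG i l j (a + s *\<^sub>R v)) has_real_derivative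
    (1 / (4 * pi)) * (- dl i l * (v$j / inner a a - 2 * a$j * inner a v / (inner a a)^2)
      + (dl i j * v$l + dl l j * v$i) / inner a a - 2 * (dl i j * a$l + dl l j * a$i) * inner a v / (inner a a)^2
      - 2 * (v$i * a$l * a$j + a$i * v$l * a$j + a$i * a$l * v$j) / (inner a a)^2
      + 8 * a$i * a$l * a$j * inner a v / (inner a a)^3)) (at 0)"
proof -
  have q: "inner a a > 0" using a by simp
  have eq: "(\<lambda>s. dG i l j (a + s *\<^sub>R v)) = (\<lambda>s. (1 / (4 * pi)) * (- dl i l * (a$j + s * v$j) / (inner a a + 2 * s * inner a v + s^2 * inner v v)
      + (dl i j * (a$l + s * v$l) + dl l j * (a$i + s * v$i)) / (inner a a + 2 * s * inner a v + s^2 * inner v v)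
      - 2 * (a$i + s * v$i) * (a$l + s * v$l) * (a$j + s * v$j) / (inner a a + 2 * s * inner a v + s^2 * inner v v)^2))"
    by (simp only: dG_def inner_line vec_line)
  show ?thesis unfolding eq
    using q by (auto intro!: derivative_eq_intros simp: field_simps power2_eq_square power3_eq_cube)
qed

lemma sum_dG: "(\<Sum>j\<in>UNIV. v$j * dG i l j z) = (1 / (4 * pi)) * (- dl i l * inner z v / inner z z + (v$i * z$l + z$i * v$l) / inner z z
       - 2 * z$i * z$l * inner z v / (inner z z)^2)"
proof -
  have iv: "inner z v = z$1 * v$1 + z$2 * v$2" by (simp add: inner_vec_def sum_2)
  obtain q where q: "inner z z = q" by blast
  show ?thesis unfolding dG_def iv q sum_2 dl_def
    using exhaust_2[of i] exhaust_2[of l] by (cases "q = 0") (auto simp: field_simps)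
qed

lemma Gamma_line:
  assumes a: "a + t *\<^sub>R v \<noteq> 0"
  shows "((\<lambda>s. GammaS i l (a + s *\<^sub>R v)) has_real_derivative
    (\<Sum>j\<in>UNIV. v$j * dG i l j (a + t *\<^sub>R v))) (at t)"
proof -
  let ?z = "a + t *\<^sub>R v"
  have sum: "(\<Sum>j\<in>UNIV. v$j * dG i l j ?z) = (1 / (4 * pi)) * (- dl i l * inner ?z v / inner ?z ?z + (v$i * ?z$l + ?z$i * v$l) / inner ?z ?z
       - 2 * ?z$i * ?z$l * inner ?z v / (inner ?z ?z)^2)"
    by (rule sum_dG)
  have "((\<lambda>s. GammaS i l (?z + s *\<^sub>R v)) has_real_derivative (\<Sum>j\<in>UNIV. v$j * dG i l j ?z)) (at 0)"
    unfolding sum by (rule Gamma_line0[OF a])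
  then have "((\<lambda>s. GammaS i l (a + (s + t) *\<^sub>R v)) has_real_derivative (\<Sum>j\<in>UNIV. v$j * dG i l j ?z)) (at 0)"
    by (simp add: algebra_simps scaleR_add_left)
  then show ?thesis using DERIV_shift[where f="\<lambda>s. GammaS i l (a + s *\<^sub>R v)" and x=0 and z=t] by simp
qed

definition dG' :: "2 \<Rightarrow> 2 \<Rightarrow> 2 \<Rightarrow> real^2 \<Rightarrow> real^2 \<Rightarrow> real" where
  "dG' i l j a v = (1 / (4 * pi)) * (- dl i l * (v$j / inner a a - 2 * a$j * inner a v / (inner a a)^2)
      + (dl i j * v$l + dl l j * v$i) / inner a a - 2 * (dl i j * a$l + dl l j * a$i) * inner a v / (inner a a)^2
      - 2 * (v$i * a$l * a$j + a$i * v$l * a$j + a$i * a$l * v$j) / (inner a a)^2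
      + 8 * a$i * a$l * a$j * inner a v / (inner a a)^3)"

lemma dG_line:
  assumes a: "a + t *\<^sub>R v \<noteq> 0"
  shows "((\<lambda>s. dG i l j (a + s *\<^sub>R v)) has_real_derivative dG' i l j (a + t *\<^sub>R v) v) (at t)"
proof -
  let ?z = "a + t *\<^sub>R v"
  have "((\<lambda>s. dG i l j (?z + s *\<^sub>R v)) has_real_derivative dG' i l j ?z v) (at 0)"
    unfolding dG'_def by (rule dG_line0[OF a])
  then have "((\<lambda>s. dG i l j (a + (s + t) *\<^sub>R v)) has_real_derivative dG' i l j ?z v) (at 0)"
    by (simp add: algebra_simps scaleR_add_left)
  then show ?thesis using DERIV_shift[where f="\<lambda>s. dG i l j (a + s *\<^sub>R v)" and x=0 and z=t] by simp
qed

lemma dl_abs: "\<bar>dl i j\<bar> \<le> 1" by (simp add: dl_def)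

lemma abs_prod2: "\<bar>a\<bar> \<le> 1 \<Longrightarrow> \<bar>b\<bar> \<le> 1 \<Longrightarrow> \<bar>a * b :: real\<bar> \<le> 1"
  by (metis abs_ge_zero abs_mult mult_le_one)
lemma abs_prod3: "\<bar>a\<bar> \<le> 1 \<Longrightarrow> \<bar>b\<bar> \<le> 1 \<Longrightarrow> \<bar>c\<bar> \<le> 1 \<Longrightarrow> \<bar>a * b * c :: real\<bar> \<le> 1"
  by (metis abs_prod2)
lemma abs_prod4: "\<bar>a\<bar> \<le> 1 \<Longrightarrow> \<bar>b\<bar> \<le> 1 \<Longrightarrow> \<bar>c\<bar> \<le> 1 \<Longrightarrow> \<bar>d\<bar> \<le> 1 \<Longrightarrow> \<bar>a * b * c * d :: real\<bar> \<le> 1"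
  by (metis abs_prod2)

lemma unit_comp: "norm (z::real^2) > 0 \<Longrightarrow> \<bar>z$k / norm z\<bar> \<le> 1"
proof -
  assume n: "norm z > 0"
  have "\<bar>z$k / norm z\<bar> = \<bar>z$k\<bar> / norm z" using n by (simp only: abs_divide abs_norm_cancel)
  also have "\<dots> \<le> 1" using component_le_norm_cart[of z k] n by (simp only: divide_le_eq_1_pos)
  finally show ?thesis .
qed

lemma dG_bound: "\<bar>dG i l j z\<bar> \<le> 1 / norm z"
proof (cases "z = 0")
  case True then show ?thesis by (simp add: dG_def)
next
  case False
  define n where "n = norm z"
  have n: "n > 0" using False by (simp add: n_def)
  define ui where "ui = z$i / n"
  define ul where "ul = z$l / n"
  define uj where "uj = z$j / n"
  have b: "\<bar>ui\<bar> \<le> 1" "\<bar>ul\<bar> \<le> 1" "\<bar>uj\<bar> \<le> 1"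
    using unit_comp n unfolding ui_def ul_def uj_def n_def by auto
  have zz: "inner z z = n^2" by (simp add: n_def power2_norm_eq_inner)
  have zi: "z$i = n * ui" "z$l = n * ul" "z$j = n * uj" using n by (auto simp: ui_def ul_def uj_def)
  have eq: "dG i l j z = (1 / (4 * pi)) / n * (- dl i l * uj + (dl i j * ul + dl l j * ui) - 2 * (ui * ul * uj))"
    unfolding dG_def zz zi using n by (simp add: field_simps power2_eq_square)
  have t: "\<bar>dl i l * uj\<bar> \<le> 1" "\<bar>dl i j * ul\<bar> \<le> 1" "\<bar>dl l j * ui\<bar> \<le> 1" "\<bar>ui * ul * uj\<bar> \<le> 1"
    using b dl_abs by (auto intro!: abs_prod2 abs_prod3)
  have P: "\<bar>- dl i l * uj + (dl i j * ul + dl l j * ui) - 2 * (ui * ul * uj)\<bar> \<le> 5"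
    using t unfolding abs_le_iff by linarith
  have "\<bar>dG i l j z\<bar> = (1 / (4 * pi)) / n * \<bar>- dl i l * uj + (dl i j * ul + dl l j * ui) - 2 * (ui * ul * uj)\<bar>"
    unfolding eq using n by (simp add: abs_mult)
  also have "\<dots> \<le> (1 / (4 * pi)) / n * 5"
    using P n by (intro mult_left_mono) auto
  also have "\<dots> \<le> 1 / n"
    using n pi_gt3 by (simp add: field_simps)
  finally show ?thesis by (simp add: n_def)
qed

lemma Gamma_bound: "\<bar>GammaS i l z\<bar> \<le> \<bar>ln (norm z)\<bar> + 1"
proof (cases "z = 0")
  case True then show ?thesis by (simp add: GammaS_def)
next
  case False
  define n where "n = norm z"
  have n: "n > 0" using False by (simp add: n_def)
  have q: "\<bar>z$i * z$l / n^2\<bar> \<le> 1"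
    using unit_comp[of z i] unit_comp[of z l] n abs_prod2[of "z$i / n" "z$l / n"]
    by (simp add: n_def power2_eq_square)
  have l: "\<bar>(if i = l then 1 else 0) * ln (1 / n)\<bar> \<le> \<bar>ln n\<bar>"
    using n by (simp add: ln_div)
  have "\<bar>GammaS i l z\<bar> = (1 / (4 * pi)) * \<bar>(if i = l then 1 else 0) * ln (1 / n) + z$i * z$l / n^2\<bar>"
    unfolding GammaS_def n_def by (simp add: abs_mult)
  also have "\<dots> \<le> (1 / (4 * pi)) * (\<bar>ln n\<bar> + 1)"
  proof (rule mult_left_mono)
    show "\<bar>(if i = l then 1 else 0) * ln (1 / n) + z$i * z$l / n^2\<bar> \<le> \<bar>ln n\<bar> + 1"
      using abs_triangle_ineq[of "(if i = l then 1 else 0) * ln (1 / n)" "z$i * z$l / n^2"] l q by linarith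
  qed simp
  also have "\<dots> \<le> \<bar>ln n\<bar> + 1"
    using pi_gt3 by (intro mult_left_le_one_le) auto
  finally show ?thesis by (simp add: n_def)
qed

lemma dG'_bound: "\<bar>dG' i l j z v\<bar> \<le> 2 * norm v / (norm z)^2"
proof (cases "z = 0 \<or> v = 0")
  case True then show ?thesis by (auto simp: dG'_def)
next
  case False
  define n where "n = norm z"
  have n: "n > 0" using False by (simp add: n_def)
  define m where "m = norm v"
  have m: "m > 0" using False by (simp add: m_def)
  define ui where "ui = z$i / n"
  define ul where "ul = z$l / n"
  define uj where "uj = z$j / n"
  define bi where "bi = v$i / m"
  define bl where "bl = v$l / m"
  define bj where "bj = v$j / m"
  define c where "c = inner z v / (n * m)"
  have b: "\<bar>ui\<bar> \<le> 1" "\<bar>ul\<bar> \<le> 1" "\<bar>uj\<bar> \<le> 1" "\<bar>bi\<bar> \<le> 1" "\<bar>bl\<bar> \<le> 1" "\<bar>bj\<bar> \<le> 1"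
    using unit_comp n m unfolding ui_def ul_def uj_def bi_def bl_def bj_def n_def m_def by auto
  have "\<bar>c\<bar> \<le> 1"
  proof -
    have "\<bar>c\<bar> = \<bar>inner z v\<bar> / (n * m)" using n m unfolding c_def by (simp only: abs_divide abs_mult abs_of_pos)
    also have "\<dots> \<le> 1" using Cauchy_Schwarz_ineq2[of z v] n m unfolding n_def m_def
      by (simp only: divide_le_eq_1_pos mult_pos_pos)
    finally show ?thesis .
  qed
  note b = b this
  have zz: "inner z z = n^2" by (simp add: n_def power2_norm_eq_inner)
  have zi: "z$i = n * ui" "z$l = n * ul" "z$j = n * uj" "v$i = m * bi" "v$l = m * bl" "v$j = m * bj"
    "inner z v = n * m * c"
    using n m by (auto simp: ui_def ul_def uj_def bi_def bl_def bj_def c_def)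
  define P where "P = - dl i l * (bj - 2 * (uj * c)) + (dl i j * bl + dl l j * bi) - 2 * (dl i j * ul + dl l j * ui) * c
      - 2 * (bi * ul * uj + ui * bl * uj + ui * ul * bj) + 8 * (ui * ul * uj * c)"
  have eq: "dG' i l j z v = (1 / (4 * pi)) * m / n^2 * P"
    unfolding dG'_def zz zi P_def using n by (simp add: field_simps power2_eq_square power3_eq_cube)
  have t: "\<bar>dl i l * bj\<bar> \<le> 1" "\<bar>dl i l * (uj * c)\<bar> \<le> 1" "\<bar>dl i j * bl\<bar> \<le> 1" "\<bar>dl l j * bi\<bar> \<le> 1"
    "\<bar>dl i j * ul * c\<bar> \<le> 1" "\<bar>dl l j * ui * c\<bar> \<le> 1"
    "\<bar>bi * ul * uj\<bar> \<le> 1" "\<bar>ui * bl * uj\<bar> \<le> 1" "\<bar>ui * ul * bj\<bar> \<le> 1" "\<bar>ui * ul * uj * c\<bar> \<le> 1"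
    using b dl_abs by (auto intro!: abs_prod2 abs_prod3 abs_prod4)
  have PP: "P = - (dl i l * bj) + 2 * (dl i l * (uj * c)) + dl i j * bl + dl l j * bi - 2 * (dl i j * ul * c) - 2 * (dl l j * ui * c)
      - 2 * (bi * ul * uj) - 2 * (ui * bl * uj) - 2 * (ui * ul * bj) + 8 * (ui * ul * uj * c)"
    unfolding P_def by (simp add: algebra_simps)
  have P: "\<bar>P\<bar> \<le> 23"
    using t unfolding PP abs_le_iff by linarith
  have "\<bar>dG' i l j z v\<bar> = (1 / (4 * pi)) * m / n^2 * \<bar>P\<bar>"
    unfolding eq using n m by (simp add: abs_mult)
  also have "\<dots> \<le> (1 / (4 * pi)) * m / n^2 * 23"
    using P n m by (intro mult_left_mono) auto
  also have "\<dots> \<le> 2 * m / n^2"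
    using n m pi_gt3 by (simp add: field_simps)
  finally show ?thesis by (simp add: n_def m_def)
qed

lemma mvt_bound:
  fixes f f' :: "real \<Rightarrow> real"
  assumes ab: "a \<le> b" and d: "\<And>s. a \<le> s \<Longrightarrow> s \<le> b \<Longrightarrow> DERIV f s :> f' s"
    and B: "\<And>s. a \<le> s \<Longrightarrow> s \<le> b \<Longrightarrow> \<bar>f' s\<bar> \<le> B"
  shows "\<bar>f b - f a\<bar> \<le> B * (b - a)"
proof (cases "a = b")
  case True then show ?thesis by simp
next
  case False
  then have "a < b" using ab by simp
  from MVT2[OF this d] obtain z where z: "a < z" "z < b" "f b - f a = (b - a) * f' z" by auto
  have "\<bar>f b - f a\<bar> = (b - a) * \<bar>f' z\<bar>" using z ab by (simp add: abs_mult)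
  also have "\<dots> \<le> (b - a) * B" using B[of z] z ab by (intro mult_left_mono) auto
  finally show ?thesis by (simp add: mult.commute)
qed

lemma seg_norm:
  fixes x y :: "real^2"
  assumes "norm y \<le> norm x / 2" "0 \<le> t" "t \<le> 1"
  shows "norm (x - t *\<^sub>R y) \<ge> norm x / 2"
proof -
  have "norm (t *\<^sub>R y) \<le> norm y" using assms by (simp add: mult_left_le_one_le)
  moreover have "norm x \<le> norm (x - t *\<^sub>R y) + norm (t *\<^sub>R y)" using norm_triangle_ineq[of "x - t *\<^sub>R y" "t *\<^sub>R y"] by simp
  ultimately show ?thesis using assms by linarith
qed

lemma dG_diff:
  fixes x y :: "real^2"
  assumes x: "norm x > 0" and y: "norm y \<le> norm x / 2" and t: "0 \<le> t" "t \<le> 1"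
  shows "\<bar>dG i l j (x - t *\<^sub>R y) - dG i l j x\<bar> \<le> 8 * norm y / (norm x)^2 * t"
proof -
  have "\<bar>dG i l j (x + t *\<^sub>R (-y)) - dG i l j (x + 0 *\<^sub>R (-y))\<bar> \<le> 8 * norm y / (norm x)^2 * (t - 0)"
  proof (rule mvt_bound[where f="\<lambda>s. dG i l j (x + s *\<^sub>R (-y))" and f'="\<lambda>s. dG' i l j (x + s *\<^sub>R (-y)) (-y)"])
    fix s assume s: "0 \<le> s" "s \<le> t"
    have ns: "norm (x + s *\<^sub>R (-y)) \<ge> norm x / 2" using seg_norm[OF y, of s] s t by simp
    then have np: "norm (x + s *\<^sub>R (-y)) > 0" using x by linarith
    then have nz: "x + s *\<^sub>R (-y) \<noteq> 0" by (metis norm_zero order_less_irrefl)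
    show "DERIV (\<lambda>s. dG i l j (x + s *\<^sub>R (-y))) s :> dG' i l j (x + s *\<^sub>R (-y)) (-y)"
      by (rule dG_line[OF nz])
    have "\<bar>dG' i l j (x + s *\<^sub>R (-y)) (-y)\<bar> \<le> 2 * norm y / (norm (x + s *\<^sub>R (-y)))^2"
      using dG'_bound[of i l j "x + s *\<^sub>R (-y)" "-y"] by simp
    also have "\<dots> \<le> 2 * norm y / (norm x / 2)^2"
    proof (rule divide_left_mono)
      show "(norm x / 2)^2 \<le> (norm (x + s *\<^sub>R (-y)))^2" by (rule power_mono[OF ns]) simp
      show "0 < (norm (x + s *\<^sub>R (-y)))^2 * (norm x / 2)^2" using np x by (intro mult_pos_pos) simp_all
    qed simp
    also have "\<dots> = 8 * norm y / (norm x)^2" by (simp add: power2_eq_square)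
    finally show "\<bar>dG' i l j (x + s *\<^sub>R (-y)) (-y)\<bar> \<le> 8 * norm y / (norm x)^2" .
  qed (use t in auto)
  then show ?thesis by simp
qed

lemma sum_abs_comp: "(\<Sum>j\<in>UNIV. \<bar>(y::real^2)$j\<bar>) \<le> 2 * norm y"
  using component_le_norm_cart[of y 1] component_le_norm_cart[of y 2] by (simp add: sum_2)

lemma taylor_bound:
  fixes x y :: "real^2"
  assumes x: "norm x > 0" and y: "norm y \<le> norm x / 2"
  shows "\<bar>GammaS i l (x - y) - GammaS i l x + (\<Sum>j\<in>UNIV. y$j * dG i l j x)\<bar> \<le> 16 * (norm y)^2 / (norm x)^2"
proof -
  let ?S = "\<Sum>j\<in>UNIV. y$j * dG i l j x"
  let ?g = "\<lambda>s. GammaS i l (x + s *\<^sub>R (-y)) + s * ?S"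
  let ?g' = "\<lambda>s. (\<Sum>j\<in>UNIV. (-y)$j * dG i l j (x + s *\<^sub>R (-y))) + ?S"
  have "\<bar>?g 1 - ?g 0\<bar> \<le> 16 * (norm y)^2 / (norm x)^2 * (1 - 0)"
  proof (rule mvt_bound[where f="?g" and f'="?g'"])
    fix s :: real assume s: "0 \<le> s" "s \<le> 1"
    have ns: "norm (x + s *\<^sub>R (-y)) \<ge> norm x / 2" using seg_norm[OF y, of s] s by simp
    then have np: "norm (x + s *\<^sub>R (-y)) > 0" using x by linarith
    then have nz: "x + s *\<^sub>R (-y) \<noteq> 0" by (metis norm_zero order_less_irrefl)
    show "DERIV ?g s :> ?g' s"
      using Gamma_line[OF nz] by (auto intro!: derivative_eq_intros)
    have "?g' s = - (\<Sum>j\<in>UNIV. y$j * (dG i l j (x - s *\<^sub>R y) - dG i l j x))"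
      by (simp add: sum_subtractf right_diff_distrib sum_negf)
    then have "\<bar>?g' s\<bar> = \<bar>\<Sum>j\<in>UNIV. y$j * (dG i l j (x - s *\<^sub>R y) - dG i l j x)\<bar>" by simp
    also have "\<dots> \<le> (\<Sum>j\<in>UNIV. \<bar>y$j\<bar> * (8 * norm y / (norm x)^2))"
    proof -
      have "\<bar>\<Sum>j\<in>UNIV. y$j * (dG i l j (x - s *\<^sub>R y) - dG i l j x)\<bar> \<le> (\<Sum>j\<in>UNIV. \<bar>y$j * (dG i l j (x - s *\<^sub>R y) - dG i l j x)\<bar>)"
        by (rule sum_abs)
      also have "\<dots> \<le> (\<Sum>j\<in>UNIV. \<bar>y$j\<bar> * (8 * norm y / (norm x)^2))"
      proof (rule sum_mono)
        fix j
        have "\<bar>dG i l j (x - s *\<^sub>R y) - dG i l j x\<bar> \<le> 8 * norm y / (norm x)^2 * s"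
          by (rule dG_diff[OF x y s])
        also have "\<dots> \<le> 8 * norm y / (norm x)^2" using s by (intro mult_left_le) auto
        finally have h: "\<bar>dG i l j (x - s *\<^sub>R y) - dG i l j x\<bar> \<le> 8 * norm y / (norm x)^2" .
        show "\<bar>y$j * (dG i l j (x - s *\<^sub>R y) - dG i l j x)\<bar> \<le> \<bar>y$j\<bar> * (8 * norm y / (norm x)^2)"
          unfolding abs_mult by (rule mult_left_mono[OF h]) simp
      qed
      finally show ?thesis .
    qed
    also have "\<dots> = (\<Sum>j\<in>UNIV. \<bar>y$j\<bar>) * (8 * norm y / (norm x)^2)" by (rule sum_distrib_right[symmetric])
    also have "\<dots> \<le> (2 * norm y) * (8 * norm y / (norm x)^2)"
      by (intro mult_right_mono sum_abs_comp) auto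
    also have "\<dots> = 16 * (norm y)^2 / (norm x)^2" by (simp add: power2_eq_square)
    finally show "\<bar>?g' s\<bar> \<le> 16 * (norm y)^2 / (norm x)^2" .
  qed auto
  then show ?thesis by (simp add: algebra_simps)
qed

lemma e_ge2: "exp 1 \<ge> (2::real)" using exp_ge_add_one_self[of 1] by simp

lemma powr_neg_le_base:
  fixes a b s :: real
  assumes "0 < a" "a \<le> b" "0 \<le> s"
  shows "b powr (-s) \<le> a powr (-s)"
  using powr_mono2'[of "-s" a b] assms by simp

lemma M2_bound:
  fixes x y :: "real^2"
  assumes x: "norm x \<ge> exp 1" and d: "0 < \<delta>"
  shows "\<bar>dG i l j (x - y) - dG i l j x\<bar> * (1 + norm y) powr -(2+\<delta>) \<le>
     indicator {..norm x/2} (norm y) * (8 / (norm x)^2) * (norm y * (1 + norm y) powr -(2+\<delta>))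
   + indicator {norm x/2..} (norm y) * (2 / norm x) * (1 + norm y) powr -(2+\<delta>)
   + (norm x / 2) powr -(2+\<delta>) * (indicator {..<norm x} (norm (x - y)) / norm (x - y))"
  (is "?L \<le> ?A + ?B + ?C")
proof -
  have \<rho>: "norm x \<ge> 2" using x e_ge2 by linarith
  let ?w = "(1 + norm y) powr -(2+\<delta>)"
  have w0: "?w \<ge> 0" by simp
  have A0: "?A \<ge> 0" "?B \<ge> 0" "?C \<ge> 0" by (auto simp: indicator_def)
  show ?thesis
  proof (cases "norm y \<le> norm x / 2")
    case True
    have "\<bar>dG i l j (x - 1 *\<^sub>R y) - dG i l j x\<bar> \<le> 8 * norm y / (norm x)^2 * 1"
      using \<rho> True by (intro dG_diff) auto
    then have "?L \<le> 8 * norm y / (norm x)^2 * ?w" by (intro mult_right_mono) auto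
    also have "\<dots> = ?A" using True by (simp add: indicator_def)
    finally show ?thesis using A0 by linarith
  next
    case False
    have "\<bar>dG i l j (x - y) - dG i l j x\<bar> \<le> 1 / norm (x - y) + 1 / norm x"
      using dG_bound[of i l j "x - y"] dG_bound[of i l j x] by linarith
    show ?thesis
    proof (cases "norm (x - y) \<ge> norm x")
      case True
      then have "1 / norm (x - y) \<le> 1 / norm x" using \<rho> by (intro divide_left_mono mult_pos_pos) auto
      then have "\<bar>dG i l j (x - y) - dG i l j x\<bar> \<le> 2 / norm x"
        using \<open>\<bar>dG i l j (x - y) - dG i l j x\<bar> \<le> 1 / norm (x - y) + 1 / norm x\<close> by simp
      then have "?L \<le> 2 / norm x * ?w" by (intro mult_right_mono) auto
      also have "\<dots> = ?B" using False by (simp add: indicator_def)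
      finally show ?thesis using A0 by linarith
    next
      case False2: False
      have ww: "?w \<le> (norm x / 2) powr -(2+\<delta>)"
        using False \<rho> d by (intro powr_neg_le_base) auto
      have "?L \<le> (1 / norm (x - y) + 1 / norm x) * ?w"
        using \<open>\<bar>dG i l j (x - y) - dG i l j x\<bar> \<le> 1 / norm (x - y) + 1 / norm x\<close> by (intro mult_right_mono) auto
      also have "\<dots> = 1 / norm (x - y) * ?w + 1 / norm x * ?w" by (simp add: algebra_simps)
      also have "1 / norm (x - y) * ?w \<le> 1 / norm (x - y) * (norm x / 2) powr -(2+\<delta>)"
        using ww by (intro mult_left_mono) auto
      also have "\<dots> = ?C" using False2 by (simp add: indicator_def)
      also have "1 / norm x * ?w \<le> ?B"
      proof -
        have "1 / norm x * ?w \<le> 2 / norm x * ?w" using \<rho> by (intro mult_right_mono divide_right_mono) auto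
        then show ?thesis using False by (simp add: indicator_def)
      qed
      finally show ?thesis using A0 by linarith
    qed
  qed
qed

lemma ln_e_plus_ge1: "n \<ge> 0 \<Longrightarrow> ln (exp 1 + n) \<ge> (1::real)"
  using ln_mono[of "exp 1" "exp 1 + n"] by simp

lemma sq_bound: "(n::real) \<ge> 0 \<Longrightarrow> 4 * n \<le> (exp 1 + n)^2"
proof -
  assume n: "n \<ge> 0"
  have "(exp 1 + n)^2 = exp 1 ^ 2 + 2 * exp 1 * n + n^2" by (simp add: power2_eq_square algebra_simps)
  moreover have "2 * exp 1 * n \<ge> 4 * n" using e_ge2 n by (simp add: mult_right_mono)
  moreover have "exp 1 ^ 2 \<ge> (0::real)" by (rule zero_le_power2)
  moreover have "n^2 \<ge> 0" by (rule zero_le_power2)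
  ultimately show ?thesis by linarith
qed

lemma ln_le_2L: "0 < r \<Longrightarrow> r \<le> 4 * n \<Longrightarrow> n \<ge> 0 \<Longrightarrow> ln r \<le> 2 * ln (exp 1 + (n::real))"
proof -
  assume r: "0 < r" "r \<le> 4 * n" and n: "n \<ge> 0"
  have "ln r \<le> ln ((exp 1 + n)^2)" using r sq_bound[OF n] by (intro ln_mono) auto
  also have "\<dots> = 2 * ln (exp 1 + n)"
  proof -
    have "exp 1 + n > 0" using n by (simp add: add_pos_nonneg)
    then show ?thesis by (subst ln_realpow) auto
  qed
  finally show ?thesis .
qed

lemma Gamma_zero: "GammaS i l 0 = 0" by (simp add: GammaS_def)

lemma nP3_le: "(n::real) \<ge> 0 \<Longrightarrow> n * (1 + n) powr -(3+\<delta>) \<le> (1 + n) powr -(2+\<delta>)"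
  using powr_shift_le[of n "3+\<delta>"] by (simp add: algebra_simps)

lemma Gfar:
  fixes x y :: "real^2"
  assumes x: "norm x \<ge> exp 1" and d: "0 < \<delta>" and y: "norm y \<ge> norm x / 2"
  shows "\<bar>GammaS i l (x - y)\<bar> * ((1 + norm y) powr -(3+\<delta>) / ln (exp 1 + norm y)) \<le>
     3 * (1 + norm y) powr -(3+\<delta>) + (norm x / 2) powr -(2+\<delta>) * (indicator {..<1} (norm (x - y)) / norm (x - y))"
proof -
  define n where "n = norm y"
  define r where "r = norm (x - y)"
  define L where "L = ln (exp 1 + n)"
  define P3 where "P3 = (1 + n) powr -(3+\<delta>)"
  have \<rho>: "norm x \<ge> 2" using x e_ge2 by linarith
  have n0: "n \<ge> 0" by (simp add: n_def)
  have L1: "L \<ge> 1" using ln_e_plus_ge1[OF n0] by (simp add: L_def)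
  have P0: "P3 \<ge> 0" by (simp add: P3_def)
  have w1: "P3 / L \<le> P3" using L1 P0 by (simp add: divide_le_eq mult_le_cancel_left1)
  have C0: "(norm x / 2) powr -(2+\<delta>) * (indicator {..<1} r / r) \<ge> 0" by (simp add: indicator_def r_def)
  have main: "\<bar>GammaS i l (x - y)\<bar> * (P3 / L) \<le> 3 * P3 + (norm x / 2) powr -(2+\<delta>) * (indicator {..<1} r / r)"
  proof (cases "r = 0")
    case True
    then have "x - y = 0" by (simp add: r_def)
    then show ?thesis using C0 P0 by (simp add: Gamma_zero)
  next
    case False
    then have r0: "r > 0" by (simp add: r_def)
    show ?thesis
    proof (cases "r < 1")
      case True
      have "\<bar>GammaS i l (x - y)\<bar> \<le> \<bar>ln r\<bar> + 1" using Gamma_bound[of i l "x - y"] by (simp add: r_def)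
      also have "\<bar>ln r\<bar> = - ln r" using True r0 by simp
      also have "- ln r + 1 \<le> 1 / r" using ln_le_minus_one[of "1/r"] r0 by (simp add: ln_div)
      finally have g: "\<bar>GammaS i l (x - y)\<bar> \<le> 1 / r" .
      have "P3 \<le> (norm x / 2) powr -(3+\<delta>)" unfolding P3_def using y \<rho> d
        by (intro powr_neg_le_base) (auto simp: n_def)
      also have "\<dots> \<le> (norm x / 2) powr -(2+\<delta>)" using \<rho> by (intro powr_mono) auto
      finally have p: "P3 / L \<le> (norm x / 2) powr -(2+\<delta>)" using w1 by linarith
      have "\<bar>GammaS i l (x - y)\<bar> * (P3 / L) \<le> 1 / r * (norm x / 2) powr -(2+\<delta>)"
        using g p L1 P0 r0 by (intro mult_mono) auto
      also have "\<dots> = (norm x / 2) powr -(2+\<delta>) * (indicator {..<1} r / r)" using True by simp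
      finally show ?thesis using P0 by linarith
    next
      case False
      have "\<bar>GammaS i l (x - y)\<bar> \<le> \<bar>ln r\<bar> + 1" using Gamma_bound[of i l "x - y"] by (simp add: r_def)
      also have "\<bar>ln r\<bar> = ln r" using False by simp
      also have "ln r \<le> 2 * L"
      proof -
        have "r \<le> norm x + n" unfolding r_def n_def by (rule norm_triangle_ineq4)
        then have "r \<le> 4 * n" using y n0 n_def by linarith
        then show ?thesis unfolding L_def using r0 n0 by (intro ln_le_2L) auto
      qed
      finally have g: "\<bar>GammaS i l (x - y)\<bar> \<le> 2 * L + 1" by simp
      have "\<bar>GammaS i l (x - y)\<bar> * (P3 / L) \<le> (2 * L + 1) * (P3 / L)"
        using g P0 L1 by (intro mult_right_mono) auto
      also have "\<dots> = (2 + 1 / L) * P3" using L1 by (simp add: field_simps)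
      also have "\<dots> \<le> 3 * P3" using L1 P0 by (intro mult_right_mono) auto
      finally show ?thesis using C0 by linarith
    qed
  qed
  then show ?thesis unfolding n_def r_def L_def P3_def .
qed

lemma M1_bound:
  fixes x y :: "real^2"
  assumes x: "norm x \<ge> exp 1" and d: "0 < \<delta>"
  shows "\<bar>GammaS i l (x - y) - GammaS i l x + (\<Sum>j\<in>UNIV. y$j * dG i l j x)\<bar>
      * ((1 + norm y) powr -(3+\<delta>) / ln (exp 1 + norm y)) \<le>
     indicator {..norm x/2} (norm y) * (16 / (norm x)^2) * (norm y * (1 + norm y) powr -(2+\<delta>))
   + indicator {norm x/2..} (norm y) * (7 * (1 + norm y) powr -(3+\<delta>) + (2 / norm x) * (1 + norm y) powr -(2+\<delta>))
   + (norm x / 2) powr -(2+\<delta>) * (indicator {..<1} (norm (x - y)) / norm (x - y))"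
  (is "\<bar>?T\<bar> * ?w \<le> ?A + ?B + ?C")
proof -
  define n where "n = norm y"
  define L where "L = ln (exp 1 + n)"
  define P3 where "P3 = (1 + n) powr -(3+\<delta>)"
  define P2 where "P2 = (1 + n) powr -(2+\<delta>)"
  have \<rho>: "norm x \<ge> 2" using x e_ge2 by linarith
  have n0: "n \<ge> 0" by (simp add: n_def)
  have L1: "L \<ge> 1" using ln_e_plus_ge1[OF n0] by (simp add: L_def)
  have P0: "P3 \<ge> 0" "P2 \<ge> 0" by (simp_all add: P3_def P2_def)
  have w1: "P3 / L \<le> P3" using L1 P0 by (simp add: divide_le_eq mult_le_cancel_left1)
  have w0: "P3 / L \<ge> 0" using L1 P0 by simp
  have nP: "n * P3 \<le> P2" unfolding P3_def P2_def by (rule nP3_le[OF n0])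
  have wdef: "?w = P3 / L" by (simp add: P3_def L_def n_def)
  have A0: "?A \<ge> 0" "?B \<ge> 0" "?C \<ge> 0" by (auto simp: indicator_def)
  show ?thesis
  proof (cases "norm y \<le> norm x / 2")
    case True
    have "\<bar>?T\<bar> \<le> 16 * (norm y)^2 / (norm x)^2" using True \<rho> by (intro taylor_bound) auto
    then have "\<bar>?T\<bar> * ?w \<le> 16 * (norm y)^2 / (norm x)^2 * P3"
      unfolding wdef using w1 w0 by (intro mult_mono) auto
    also have "\<dots> = (16 / (norm x)^2) * n * (n * P3)" by (simp add: power2_eq_square n_def)
    also have "\<dots> \<le> (16 / (norm x)^2) * n * P2" using nP n0 by (intro mult_left_mono) auto
    also have "\<dots> = ?A" using True by (simp add: n_def P2_def indicator_def)
    finally show ?thesis using A0 by linarith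
  next
    case False
    have y: "norm y \<ge> norm x / 2" using False by simp
    have lr: "ln (norm x) \<ge> 1" using x ln_mono[of "exp 1" "norm x"] by simp
    have "\<bar>?T\<bar> \<le> \<bar>GammaS i l (x - y)\<bar> + \<bar>GammaS i l x\<bar> + \<bar>\<Sum>j\<in>UNIV. y$j * dG i l j x\<bar>" by linarith
    also have "\<bar>GammaS i l x\<bar> \<le> 2 * ln (norm x)"
      using Gamma_bound[of i l x] lr by simp
    also have "\<bar>\<Sum>j\<in>UNIV. y$j * dG i l j x\<bar> \<le> 2 * n / norm x"
    proof -
      have "\<bar>\<Sum>j\<in>UNIV. y$j * dG i l j x\<bar> \<le> (\<Sum>j\<in>UNIV. \<bar>y$j\<bar> * (1 / norm x))"
      proof (intro order_trans[OF sum_abs] sum_mono)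
        fix j
        show "\<bar>y$j * dG i l j x\<bar> \<le> \<bar>y$j\<bar> * (1 / norm x)"
          unfolding abs_mult by (rule mult_left_mono[OF dG_bound]) simp
      qed
      also have "\<dots> = (\<Sum>j\<in>UNIV. \<bar>y$j\<bar>) * (1 / norm x)" by (rule sum_distrib_right[symmetric])
      also have "\<dots> \<le> 2 * norm y * (1 / norm x)" using \<rho> by (intro mult_right_mono sum_abs_comp) auto
      finally show ?thesis by (simp add: n_def)
    qed
    finally have T: "\<bar>?T\<bar> \<le> \<bar>GammaS i l (x - y)\<bar> + 2 * ln (norm x) + 2 * n / norm x" by simp
    have "\<bar>?T\<bar> * ?w \<le> (\<bar>GammaS i l (x - y)\<bar> + 2 * ln (norm x) + 2 * n / norm x) * ?w"
      using T w0 unfolding wdef by (intro mult_right_mono) auto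
    also have "\<dots> = \<bar>GammaS i l (x - y)\<bar> * (P3 / L) + 2 * ln (norm x) * (P3 / L) + 2 * n / norm x * (P3 / L)"
      unfolding wdef by (simp only: distrib_right)
    also have "\<bar>GammaS i l (x - y)\<bar> * (P3 / L) \<le> 3 * P3 + ?C"
      using Gfar[OF x d y, of i l] unfolding wdef[symmetric] by (simp add: P3_def n_def)
    also have "2 * ln (norm x) * (P3 / L) \<le> 4 * P3"
    proof -
      have "ln (norm x) \<le> 2 * L" unfolding L_def
        using \<rho> y n0 by (intro ln_le_2L) (auto simp: n_def)
      then have "2 * ln (norm x) * (P3 / L) \<le> 2 * (2 * L) * (P3 / L)"
        using w0 by (intro mult_right_mono) auto
      also have "\<dots> = 4 * P3" using L1 by simp
      finally show ?thesis .
    qed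
    also have "2 * n / norm x * (P3 / L) \<le> 2 / norm x * P2"
    proof -
      have "2 * n / norm x * (P3 / L) \<le> 2 * n / norm x * P3"
        using w1 n0 \<rho> by (intro mult_left_mono) auto
      also have "\<dots> = 2 / norm x * (n * P3)" by simp
      also have "\<dots> \<le> 2 / norm x * P2" using nP \<rho> by (intro mult_left_mono) auto
      finally show ?thesis .
    qed
    finally have "\<bar>?T\<bar> * ?w \<le> 7 * P3 + 2 / norm x * P2 + ?C" by simp
    also have "7 * P3 + 2 / norm x * P2 = ?B" using y by (simp add: P3_def P2_def n_def indicator_def)
    finally show ?thesis using A0 by linarith
  qed
qed

lemma pw_div_sq: "(\<rho>::real) > 0 \<Longrightarrow> \<rho> powr a / \<rho>^2 = \<rho> powr (a - 2)"
  by (simp add: powr_diff powr_numeral)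

lemma pw1:
  assumes \<rho>: "(\<rho>::real) \<ge> 2" and d: "\<delta> < 1"
  shows "(1 + \<rho>/2) powr (1 - \<delta>) / \<rho>^2 \<le> \<rho> powr -(1+\<delta>)"
proof -
  have "(1 + \<rho>/2) powr (1 - \<delta>) \<le> \<rho> powr (1 - \<delta>)" using \<rho> d by (intro powr_mono2) auto
  then have "(1 + \<rho>/2) powr (1 - \<delta>) / \<rho>^2 \<le> \<rho> powr (1 - \<delta>) / \<rho>^2" using \<rho> by (intro divide_right_mono) auto
  also have "\<dots> = \<rho> powr -(1+\<delta>)" using \<rho> by (subst pw_div_sq) (auto simp: algebra_simps)
  finally show ?thesis .
qed

lemma pw2:
  assumes \<rho>: "(\<rho>::real) \<ge> 2" and a: "a \<ge> 0"
  shows "(1 + \<rho>/2) powr (-a) \<le> 2 powr a * \<rho> powr (-a)"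
proof -
  have "(1 + \<rho>/2) powr (-a) \<le> (\<rho>/2) powr (-a)" using \<rho> a by (intro powr_neg_le_base) auto
  also have "\<dots> = 2 powr a * \<rho> powr (-a)" using \<rho> by (simp add: powr_divide powr_minus_divide)
  finally show ?thesis .
qed

lemma pw2': 
  assumes \<rho>: "(\<rho>::real) \<ge> 2" and a: "a \<ge> 0"
  shows "(\<rho>/2) powr (-a) = 2 powr a * \<rho> powr (-a)"
  using \<rho> by (simp add: powr_divide powr_minus_divide)

lemma pw_mult: "(\<rho>::real) > 0 \<Longrightarrow> \<rho> powr a * \<rho> = \<rho> powr (a + 1)"
  by (simp add: powr_add)

lemma pw_div: "(\<rho>::real) > 0 \<Longrightarrow> \<rho> powr a / \<rho> = \<rho> powr (a - 1)"
  by (simp add: powr_diff)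

lemma two_powr_le: "0 \<le> a \<Longrightarrow> a \<le> 1 \<Longrightarrow> 2 powr a \<le> (2::real)"
  using powr_mono[of a 1 2] by simp

lemma two_powr_le2: "0 \<le> a \<Longrightarrow> a \<le> 2 \<Longrightarrow> 2 powr a \<le> (4::real)"
  using powr_mono[of a 2 2] by simp

lemma two_powr_le3: "0 \<le> a \<Longrightarrow> a \<le> 3 \<Longrightarrow> 2 powr a \<le> (8::real)"
  using powr_mono[of a 3 2] by simp

lemma nn_cmult_le:
  assumes c: "c \<ge> 0" and f: "\<And>y. f y \<ge> 0" and [measurable]: "f \<in> borel_measurable lborel"
    and I: "(\<integral>\<^sup>+y. ennreal (f y) \<partial>lborel) \<le> ennreal B"
  shows "(\<integral>\<^sup>+y. ennreal (c * f y) \<partial>lborel) \<le> ennreal (c * B)"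
proof -
  have "(\<integral>\<^sup>+y. ennreal (c * f y) \<partial>lborel) = (\<integral>\<^sup>+y. ennreal c * ennreal (f y) \<partial>lborel)"
    using c f by (simp add: ennreal_mult)
  also have "\<dots> = ennreal c * (\<integral>\<^sup>+y. ennreal (f y) \<partial>lborel)" by (rule nn_integral_cmult) measurable
  also have "\<dots> \<le> ennreal c * ennreal B" using I by (rule mult_left_mono) simp
  also have "\<dots> \<le> ennreal (c * B)"
  proof (cases "B \<ge> 0")
    case True then show ?thesis using c by (simp add: ennreal_mult)
  next
    case False then show ?thesis by (simp add: ennreal_neg)
  qed
  finally show ?thesis .
qed

lemma nn_add3_le:
  assumes f: "\<And>y. f y \<ge> 0" and g: "\<And>y. g y \<ge> 0" and h: "\<And>y. h y \<ge> 0"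
    and [measurable]: "f \<in> borel_measurable lborel" "g \<in> borel_measurable lborel" "h \<in> borel_measurable lborel"
    and If: "(\<integral>\<^sup>+y. ennreal (f y) \<partial>lborel) \<le> ennreal a"
    and Ig: "(\<integral>\<^sup>+y. ennreal (g y) \<partial>lborel) \<le> ennreal b"
    and Ih: "(\<integral>\<^sup>+y. ennreal (h y) \<partial>lborel) \<le> ennreal c"
    and abc: "a \<ge> 0" "b \<ge> 0" "c \<ge> 0"
  shows "(\<integral>\<^sup>+y. ennreal (f y + g y + h y) \<partial>lborel) \<le> ennreal (a + b + c)"
proof -
  have "(\<integral>\<^sup>+y. ennreal (f y + g y + h y) \<partial>lborel) = (\<integral>\<^sup>+y. ennreal (f y) + ennreal (g y) + ennreal (h y) \<partial>lborel)"
    using f g h by (intro nn_integral_cong) (simp add: ennreal_plus)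
  also have "\<dots> = (\<integral>\<^sup>+y. ennreal (f y) + ennreal (g y) \<partial>lborel) + (\<integral>\<^sup>+y. ennreal (h y) \<partial>lborel)"
    by (rule nn_integral_add) measurable
  also have "\<dots> = (\<integral>\<^sup>+y. ennreal (f y) \<partial>lborel) + (\<integral>\<^sup>+y. ennreal (g y) \<partial>lborel) + (\<integral>\<^sup>+y. ennreal (h y) \<partial>lborel)"
    by (subst nn_integral_add) auto
  also have "\<dots> \<le> ennreal a + ennreal b + ennreal c" using If Ig Ih by (intro add_mono) auto
  also have "\<dots> = ennreal (a + b + c)" using abc by (simp add: ennreal_plus)
  finally show ?thesis .
qed

definition K2 :: "real \<Rightarrow> real" where "K2 \<delta> = cR * (16 / (1 - \<delta>) + 8 / \<delta> + 16)"

lemma Int2: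
  fixes x :: "real^2"
  assumes x: "norm x \<ge> exp 1" and d: "0 < \<delta>" "\<delta> < 1"
  shows "(\<integral>\<^sup>+y. ennreal (\<bar>dG i l j (x - y) - dG i l j x\<bar> * (1 + norm y) powr -(2+\<delta>)) \<partial>lborel)
         \<le> ennreal (K2 \<delta> * norm x powr -(1+\<delta>))"
proof -
  define \<rho> where "\<rho> = norm x"
  have \<rho>: "\<rho> \<ge> 2" using x e_ge2 by (simp add: \<rho>_def)
  have cR: "cR > 0" by (rule cR_pos)
  let ?f = "\<lambda>y::real^2. (8 / \<rho>^2) * (indicator {..\<rho>/2} (norm y) * norm y * (1 + norm y) powr -(2+\<delta>))"
  let ?g = "\<lambda>y::real^2. (2 / \<rho>) * (indicator {\<rho>/2..} (norm y) * (1 + norm y) powr -(2+\<delta>))"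
  let ?h = "\<lambda>y::real^2. (\<rho> / 2) powr -(2+\<delta>) * (indicator {..<\<rho>} (norm (x - y)) / norm (x - y))"
  have "(\<integral>\<^sup>+y. ennreal (\<bar>dG i l j (x - y) - dG i l j x\<bar> * (1 + norm y) powr -(2+\<delta>)) \<partial>lborel)
      \<le> (\<integral>\<^sup>+y. ennreal (?f y + ?g y + ?h y) \<partial>lborel)"
  proof (rule nn_integral_mono)
    fix y :: "real^2"
    show "ennreal (\<bar>dG i l j (x - y) - dG i l j x\<bar> * (1 + norm y) powr -(2+\<delta>)) \<le> ennreal (?f y + ?g y + ?h y)"
      using M2_bound[OF x d(1), of i l j y] by (intro ennreal_leI) (simp add: \<rho>_def algebra_simps)
  qed
  also have "\<dots> \<le> ennreal ((8 / \<rho>^2) * (2 * cR * (1 + \<rho>/2) powr (1 - \<delta>) / (1 - \<delta>))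
        + (2 / \<rho>) * (2 * cR * (1 + \<rho>/2) powr (2 - (2+\<delta>)) / ((2+\<delta>) - 2))
        + (\<rho> / 2) powr -(2+\<delta>) * (2 * cR * \<rho>))"
  proof (rule nn_add3_le)
    show "(\<integral>\<^sup>+y. ennreal (?f y) \<partial>lborel) \<le> ennreal ((8 / \<rho>^2) * (2 * cR * (1 + \<rho>/2) powr (1 - \<delta>) / (1 - \<delta>)))"
      using \<rho> d by (intro nn_cmult_le L_near) (auto simp: indicator_def)
    show "(\<integral>\<^sup>+y. ennreal (?g y) \<partial>lborel) \<le> ennreal ((2 / \<rho>) * (2 * cR * (1 + \<rho>/2) powr (2 - (2+\<delta>)) / ((2+\<delta>) - 2)))"
      using \<rho> d by (intro nn_cmult_le L_tail) (auto simp: indicator_def)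
    show "(\<integral>\<^sup>+y. ennreal (?h y) \<partial>lborel) \<le> ennreal ((\<rho> / 2) powr -(2+\<delta>) * (2 * cR * \<rho>))"
      using \<rho> d by (intro nn_cmult_le L_ball_shift) (auto simp: indicator_def)
  qed (use \<rho> d cR in \<open>auto simp: indicator_def\<close>)
  also have "\<dots> \<le> ennreal (K2 \<delta> * \<rho> powr -(1+\<delta>))"
  proof (rule ennreal_leI)
    have t1: "(8 / \<rho>^2) * (2 * cR * (1 + \<rho>/2) powr (1 - \<delta>) / (1 - \<delta>)) \<le> cR * (16 / (1 - \<delta>)) * \<rho> powr -(1+\<delta>)"
    proof -
      have "(8 / \<rho>^2) * (2 * cR * (1 + \<rho>/2) powr (1 - \<delta>) / (1 - \<delta>)) = cR * (16 / (1 - \<delta>)) * ((1 + \<rho>/2) powr (1 - \<delta>) / \<rho>^2)"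
        by (simp add: field_simps)
      also have "\<dots> \<le> cR * (16 / (1 - \<delta>)) * \<rho> powr -(1+\<delta>)"
        using pw1[OF \<rho> d(2)] cR d by (intro mult_left_mono) auto
      finally show ?thesis .
    qed
    have t2: "(2 / \<rho>) * (2 * cR * (1 + \<rho>/2) powr (2 - (2+\<delta>)) / ((2+\<delta>) - 2)) \<le> cR * (8 / \<delta>) * \<rho> powr -(1+\<delta>)"
    proof -
      have "(2 / \<rho>) * (2 * cR * (1 + \<rho>/2) powr (2 - (2+\<delta>)) / ((2+\<delta>) - 2)) = cR * (4 / \<delta>) * ((1 + \<rho>/2) powr (-\<delta>) / \<rho>)"
        by (simp add: field_simps)
      also have "\<dots> \<le> cR * (4 / \<delta>) * (2 * \<rho> powr (-\<delta>) / \<rho>)"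
      proof -
        have "(1 + \<rho>/2) powr (-\<delta>) \<le> 2 powr \<delta> * \<rho> powr (-\<delta>)" using pw2[OF \<rho>, of \<delta>] d by simp
        also have "\<dots> \<le> 2 * \<rho> powr (-\<delta>)" using two_powr_le[of \<delta>] d by (intro mult_right_mono) auto
        finally show ?thesis using cR d \<rho> by (intro mult_left_mono divide_right_mono) auto
      qed
      also have "\<dots> = cR * (8 / \<delta>) * (\<rho> powr (-\<delta>) / \<rho>)" by simp
      also have "\<rho> powr (-\<delta>) / \<rho> = \<rho> powr -(1+\<delta>)"
      proof -
        have "\<rho> powr (-\<delta>) / \<rho> = \<rho> powr (-\<delta> - 1)" using \<rho> by (simp add: pw_div)
        also have "-\<delta> - 1 = -(1+\<delta>)" by simp
        finally show ?thesis .
      qed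
      finally show ?thesis by simp
    qed
    have t3: "(\<rho> / 2) powr -(2+\<delta>) * (2 * cR * \<rho>) \<le> cR * 16 * \<rho> powr -(1+\<delta>)"
    proof -
      have "(\<rho> / 2) powr -(2+\<delta>) * (2 * cR * \<rho>) = 2 powr (2+\<delta>) * (2 * cR) * (\<rho> powr -(2+\<delta>) * \<rho>)"
        using pw2'[OF \<rho>, of "2+\<delta>"] d by simp
      also have "\<rho> powr -(2+\<delta>) * \<rho> = \<rho> powr -(1+\<delta>)" using \<rho> by (subst pw_mult) (auto simp: algebra_simps)
      also have "2 powr (2+\<delta>) * (2 * cR) * \<rho> powr -(1+\<delta>) \<le> 8 * (2 * cR) * \<rho> powr -(1+\<delta>)"
        using two_powr_le3[of "2+\<delta>"] d cR by (intro mult_right_mono) auto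
      finally show ?thesis by simp
    qed
    show "(8 / \<rho>^2) * (2 * cR * (1 + \<rho>/2) powr (1 - \<delta>) / (1 - \<delta>))
        + (2 / \<rho>) * (2 * cR * (1 + \<rho>/2) powr (2 - (2+\<delta>)) / ((2+\<delta>) - 2))
        + (\<rho> / 2) powr -(2+\<delta>) * (2 * cR * \<rho>) \<le> K2 \<delta> * \<rho> powr -(1+\<delta>)"
      using t1 t2 t3 unfolding K2_def by (simp add: algebra_simps)
  qed
  finally show ?thesis by (simp add: \<rho>_def)
qed

lemma nn_add4_le:
  assumes f: "\<And>y. f y \<ge> 0" and g: "\<And>y. g y \<ge> 0" and h: "\<And>y. h y \<ge> 0" and k: "\<And>y. k y \<ge> 0"
    and [measurable]: "f \<in> borel_measurable lborel" "g \<in> borel_measurable lborel" "h \<in> borel_measurable lborel"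
       "k \<in> borel_measurable lborel"
    and If: "(\<integral>\<^sup>+y. ennreal (f y) \<partial>lborel) \<le> ennreal a"
    and Ig: "(\<integral>\<^sup>+y. ennreal (g y) \<partial>lborel) \<le> ennreal b"
    and Ih: "(\<integral>\<^sup>+y. ennreal (h y) \<partial>lborel) \<le> ennreal c"
    and Ik: "(\<integral>\<^sup>+y. ennreal (k y) \<partial>lborel) \<le> ennreal e"
    and abc: "a \<ge> 0" "b \<ge> 0" "c \<ge> 0" "e \<ge> 0"
  shows "(\<integral>\<^sup>+y. ennreal (f y + g y + h y + k y) \<partial>lborel) \<le> ennreal (a + b + c + e)"
proof -
  have "(\<integral>\<^sup>+y. ennreal ((f y + g y) + h y + k y) \<partial>lborel) \<le> ennreal ((a + b) + c + e)"
  proof (rule nn_add3_le)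
    have "(\<integral>\<^sup>+y. ennreal (f y + g y + (\<lambda>_. 0) y) \<partial>lborel) \<le> ennreal (a + b + 0)"
      by (rule nn_add3_le) (use f g If Ig abc in auto)
    then show "(\<integral>\<^sup>+y. ennreal (f y + g y) \<partial>lborel) \<le> ennreal (a + b)" by simp
  qed (use f g h k Ih Ik abc in auto)
  then show ?thesis by (simp add: add.assoc)
qed

definition K1 :: "real \<Rightarrow> real" where "K1 \<delta> = cR * (32 / (1 - \<delta>) + 56 + 8 / \<delta> + 16)"

lemma Int1:
  fixes x :: "real^2"
  assumes x: "norm x \<ge> exp 1" and d: "0 < \<delta>" "\<delta> < 1"
  shows "(\<integral>\<^sup>+y. ennreal (\<bar>GammaS i l (x - y) - GammaS i l x + (\<Sum>j\<in>UNIV. y$j * dG i l j x)\<bar>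
      * ((1 + norm y) powr -(3+\<delta>) / ln (exp 1 + norm y))) \<partial>lborel)
         \<le> ennreal (K1 \<delta> * norm x powr -(1+\<delta>))"
proof -
  define \<rho> where "\<rho> = norm x"
  have \<rho>: "\<rho> \<ge> 2" using x e_ge2 by (simp add: \<rho>_def)
  have cR: "cR > 0" by (rule cR_pos)
  let ?f = "\<lambda>y::real^2. (16 / \<rho>^2) * (indicator {..\<rho>/2} (norm y) * norm y * (1 + norm y) powr -(2+\<delta>))"
  let ?g = "\<lambda>y::real^2. 7 * (indicator {\<rho>/2..} (norm y) * (1 + norm y) powr -(3+\<delta>))"
  let ?g2 = "\<lambda>y::real^2. (2 / \<rho>) * (indicator {\<rho>/2..} (norm y) * (1 + norm y) powr -(2+\<delta>))"
  let ?h = "\<lambda>y::real^2. (\<rho> / 2) powr -(2+\<delta>) * (indicator {..<1} (norm (x - y)) / norm (x - y))"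
  have "(\<integral>\<^sup>+y. ennreal (\<bar>GammaS i l (x - y) - GammaS i l x + (\<Sum>j\<in>UNIV. y$j * dG i l j x)\<bar>
      * ((1 + norm y) powr -(3+\<delta>) / ln (exp 1 + norm y))) \<partial>lborel)
      \<le> (\<integral>\<^sup>+y. ennreal (?f y + ?g y + ?g2 y + ?h y) \<partial>lborel)"
  proof (rule nn_integral_mono)
    fix y :: "real^2"
    show "ennreal (\<bar>GammaS i l (x - y) - GammaS i l x + (\<Sum>j\<in>UNIV. y$j * dG i l j x)\<bar>
      * ((1 + norm y) powr -(3+\<delta>) / ln (exp 1 + norm y))) \<le> ennreal (?f y + ?g y + ?g2 y + ?h y)"
      using M1_bound[OF x d(1), of i l y] by (intro ennreal_leI) (simp add: \<rho>_def algebra_simps)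
  qed
  also have "\<dots> \<le> ennreal ((16 / \<rho>^2) * (2 * cR * (1 + \<rho>/2) powr (1 - \<delta>) / (1 - \<delta>))
        + 7 * (2 * cR * (1 + \<rho>/2) powr (2 - (3+\<delta>)) / ((3+\<delta>) - 2))
        + (2 / \<rho>) * (2 * cR * (1 + \<rho>/2) powr (2 - (2+\<delta>)) / ((2+\<delta>) - 2))
        + (\<rho> / 2) powr -(2+\<delta>) * (2 * cR * 1))"
  proof (rule nn_add4_le)
    show "(\<integral>\<^sup>+y. ennreal (?f y) \<partial>lborel) \<le> ennreal ((16 / \<rho>^2) * (2 * cR * (1 + \<rho>/2) powr (1 - \<delta>) / (1 - \<delta>)))"
      using \<rho> d by (intro nn_cmult_le L_near) (auto simp: indicator_def)
    show "(\<integral>\<^sup>+y. ennreal (?g y) \<partial>lborel) \<le> ennreal (7 * (2 * cR * (1 + \<rho>/2) powr (2 - (3+\<delta>)) / ((3+\<delta>) - 2)))"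
      using \<rho> d by (intro nn_cmult_le L_tail) (auto simp: indicator_def)
    show "(\<integral>\<^sup>+y. ennreal (?g2 y) \<partial>lborel) \<le> ennreal ((2 / \<rho>) * (2 * cR * (1 + \<rho>/2) powr (2 - (2+\<delta>)) / ((2+\<delta>) - 2)))"
      using \<rho> d by (intro nn_cmult_le L_tail) (auto simp: indicator_def)
    show "(\<integral>\<^sup>+y. ennreal (?h y) \<partial>lborel) \<le> ennreal ((\<rho> / 2) powr -(2+\<delta>) * (2 * cR * 1))"
      using \<rho> d by (intro nn_cmult_le L_ball_shift) (auto simp: indicator_def)
  qed (use \<rho> d cR in \<open>auto simp: indicator_def\<close>)
  also have "\<dots> \<le> ennreal (K1 \<delta> * \<rho> powr -(1+\<delta>))"
  proof (rule ennreal_leI)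
    have t1: "(16 / \<rho>^2) * (2 * cR * (1 + \<rho>/2) powr (1 - \<delta>) / (1 - \<delta>)) \<le> cR * (32 / (1 - \<delta>)) * \<rho> powr -(1+\<delta>)"
    proof -
      have "(16 / \<rho>^2) * (2 * cR * (1 + \<rho>/2) powr (1 - \<delta>) / (1 - \<delta>)) = cR * (32 / (1 - \<delta>)) * ((1 + \<rho>/2) powr (1 - \<delta>) / \<rho>^2)"
        by (simp add: field_simps)
      also have "\<dots> \<le> cR * (32 / (1 - \<delta>)) * \<rho> powr -(1+\<delta>)"
        using pw1[OF \<rho> d(2)] cR d by (intro mult_left_mono) auto
      finally show ?thesis .
    qed
    have t2: "7 * (2 * cR * (1 + \<rho>/2) powr (2 - (3+\<delta>)) / ((3+\<delta>) - 2)) \<le> cR * 56 * \<rho> powr -(1+\<delta>)"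
    proof -
      have e: "2 - (3+\<delta>) = -(1+\<delta>)" "(3+\<delta>) - 2 = 1 + \<delta>" by simp_all
      have "(1 + \<rho>/2) powr -(1+\<delta>) \<le> 2 powr (1+\<delta>) * \<rho> powr -(1+\<delta>)" using pw2[OF \<rho>, of "1+\<delta>"] d by simp
      also have "\<dots> \<le> 4 * \<rho> powr -(1+\<delta>)" using two_powr_le2[of "1+\<delta>"] d by (intro mult_right_mono) auto
      finally have p: "(1 + \<rho>/2) powr -(1+\<delta>) \<le> 4 * \<rho> powr -(1+\<delta>)" .
      have "7 * (2 * cR * (1 + \<rho>/2) powr (2 - (3+\<delta>)) / ((3+\<delta>) - 2)) = (14 * cR) * ((1 + \<rho>/2) powr -(1+\<delta>) / (1 + \<delta>))"
        unfolding e by simp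
      also have "\<dots> \<le> (14 * cR) * ((1 + \<rho>/2) powr -(1+\<delta>))"
      proof (rule mult_left_mono)
        have "0 \<le> (1 + \<rho>/2) powr -(1+\<delta>)" by simp
        then have "0 \<le> (1 + \<rho>/2) powr -(1+\<delta>) * \<delta>" using d by simp
        then show "(1 + \<rho>/2) powr -(1+\<delta>) / (1 + \<delta>) \<le> (1 + \<rho>/2) powr -(1+\<delta>)"
          using d by (simp add: divide_le_eq algebra_simps)
      qed (use cR in simp)
      also have "\<dots> \<le> (14 * cR) * (4 * \<rho> powr -(1+\<delta>))" using p cR by (intro mult_left_mono) auto
      finally show ?thesis by simp
    qed
    have t3: "(2 / \<rho>) * (2 * cR * (1 + \<rho>/2) powr (2 - (2+\<delta>)) / ((2+\<delta>) - 2)) \<le> cR * (8 / \<delta>) * \<rho> powr -(1+\<delta>)"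
    proof -
      have "(2 / \<rho>) * (2 * cR * (1 + \<rho>/2) powr (2 - (2+\<delta>)) / ((2+\<delta>) - 2)) = cR * (4 / \<delta>) * ((1 + \<rho>/2) powr (-\<delta>) / \<rho>)"
        by (simp add: field_simps)
      also have "\<dots> \<le> cR * (4 / \<delta>) * (2 * \<rho> powr (-\<delta>) / \<rho>)"
      proof -
        have "(1 + \<rho>/2) powr (-\<delta>) \<le> 2 powr \<delta> * \<rho> powr (-\<delta>)" using pw2[OF \<rho>, of \<delta>] d by simp
        also have "\<dots> \<le> 2 * \<rho> powr (-\<delta>)" using two_powr_le[of \<delta>] d by (intro mult_right_mono) auto
        finally show ?thesis using cR d \<rho> by (intro mult_left_mono divide_right_mono) auto
      qed
      also have "\<dots> = cR * (8 / \<delta>) * (\<rho> powr (-\<delta>) / \<rho>)" by simp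
      also have "\<rho> powr (-\<delta>) / \<rho> = \<rho> powr -(1+\<delta>)"
      proof -
        have "\<rho> powr (-\<delta>) / \<rho> = \<rho> powr (-\<delta> - 1)" using \<rho> by (simp add: pw_div)
        also have "-\<delta> - 1 = -(1+\<delta>)" by simp
        finally show ?thesis .
      qed
      finally show ?thesis by simp
    qed
    have t4: "(\<rho> / 2) powr -(2+\<delta>) * (2 * cR * 1) \<le> cR * 16 * \<rho> powr -(1+\<delta>)"
    proof -
      have "(\<rho> / 2) powr -(2+\<delta>) * (2 * cR * 1) = 2 powr (2+\<delta>) * (2 * cR) * \<rho> powr -(2+\<delta>)"
        using pw2'[OF \<rho>, of "2+\<delta>"] d by simp
      also have "\<dots> \<le> 8 * (2 * cR) * \<rho> powr -(2+\<delta>)"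
        using two_powr_le3[of "2+\<delta>"] d cR by (intro mult_right_mono) auto
      also have "\<rho> powr -(2+\<delta>) \<le> \<rho> powr -(1+\<delta>)" using \<rho> by (intro powr_mono) auto
      then have "8 * (2 * cR) * \<rho> powr -(2+\<delta>) \<le> 8 * (2 * cR) * \<rho> powr -(1+\<delta>)" using cR by (intro mult_left_mono) auto
      finally show ?thesis by simp
    qed
    show "(16 / \<rho>^2) * (2 * cR * (1 + \<rho>/2) powr (1 - \<delta>) / (1 - \<delta>))
        + 7 * (2 * cR * (1 + \<rho>/2) powr (2 - (3+\<delta>)) / ((3+\<delta>) - 2))
        + (2 / \<rho>) * (2 * cR * (1 + \<rho>/2) powr (2 - (2+\<delta>)) / ((2+\<delta>) - 2))
        + (\<rho> / 2) powr -(2+\<delta>) * (2 * cR * 1) \<le> K1 \<delta> * \<rho> powr -(1+\<delta>)"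
      using t1 t2 t3 t4 unfolding K1_def by (simp add: algebra_simps)
  qed
  finally show ?thesis by (simp add: \<rho>_def)
qed

lemma partial_eq:
  assumes x: "x \<noteq> 0"
  shows "partial j (GammaS i l) x = dG i l j x"
proof -
  have "((\<lambda>s. GammaS i l (x + s *\<^sub>R axis j 1)) has_real_derivative
      (\<Sum>k\<in>UNIV. axis j 1 $ k * dG i l k (x + 0 *\<^sub>R axis j 1))) (at 0)"
    using x by (intro Gamma_line) simp
  moreover have "(\<Sum>k\<in>UNIV. axis j (1::real) $ k * dG i l k (x + 0 *\<^sub>R axis j 1)) = dG i l j x"
    using exhaust_2[of j] by (auto simp: axis_def sum_2)
  ultimately show ?thesis unfolding partial_def by (simp add: DERIV_imp_deriv)
qed

lemma GammaS_meas[measurable]: "GammaS i l \<in> borel_measurable borel"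
  unfolding GammaS_def by measurable

lemma dG_meas[measurable]: "dG i l j \<in> borel_measurable borel"
  unfolding dG_def by measurable

lemma partial_meas[measurable]: "partial j (GammaS i l) \<in> borel_measurable borel"
proof -
  have "partial j (GammaS i l) = (\<lambda>z. if z = 0 then partial j (GammaS i l) 0 else dG i l j z)"
    by (auto simp: partial_eq)
  also have "\<dots> \<in> borel_measurable borel" by measurable
  finally show ?thesis .
qed

lemma Xlog_bound:
  assumes f: "f \<in> Xlog_space \<alpha>"
  shows "\<bar>(f y :: real^2) $ l\<bar> \<le> Xlog_norm \<alpha> f * ((1 + norm y) powr (-\<alpha>) / ln (exp 1 + norm y))"
proof -
  have bdd: "bdd_above (range (\<lambda>x. (1 + norm x) powr \<alpha> * ln (exp 1 + norm x) * norm (f x)))"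
    using f by (simp add: Xlog_space_def)
  have le: "(1 + norm y) powr \<alpha> * ln (exp 1 + norm y) * norm (f y) \<le> Xlog_norm \<alpha> f"
    unfolding Xlog_norm_def by (rule cSUP_upper[OF _ bdd]) simp
  have L1: "ln (exp 1 + norm y) \<ge> 1" by (rule ln_e_plus_ge1) simp
  have p1: "1 + norm y > 0" by (simp add: add_pos_nonneg)
  have pos: "(1 + norm y) powr \<alpha> * ln (exp 1 + norm y) > 0" using L1 p1 by (intro mult_pos_pos) auto
  have "\<bar>f y $ l\<bar> \<le> norm (f y)" by (rule component_le_norm_cart)
  also have "\<dots> \<le> Xlog_norm \<alpha> f / ((1 + norm y) powr \<alpha> * ln (exp 1 + norm y))"
    using le pos by (simp add: le_divide_eq mult.commute)
  also have "\<dots> = Xlog_norm \<alpha> f * ((1 + norm y) powr (-\<alpha>) / ln (exp 1 + norm y))"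
    by (simp add: powr_minus_divide)
  finally show ?thesis .
qed

lemma Xlog_norm_nonneg:
  assumes f: "f \<in> Xlog_space \<alpha>"
  shows "Xlog_norm \<alpha> (f :: real^2 \<Rightarrow> real^2) \<ge> 0"
proof -
  have bdd: "bdd_above (range (\<lambda>x. (1 + norm x) powr \<alpha> * ln (exp 1 + norm x) * norm (f x)))"
    using f by (simp add: Xlog_space_def)
  have le: "(1 + norm (0::real^2)) powr \<alpha> * ln (exp 1 + norm (0::real^2)) * norm (f 0) \<le> Xlog_norm \<alpha> f"
    unfolding Xlog_norm_def by (rule cSUP_upper[OF _ bdd]) simp
  moreover have "(1 + norm (0::real^2)) powr \<alpha> * ln (exp 1 + norm (0::real^2)) * norm (f 0) \<ge> 0" by simp
  ultimately show ?thesis by linarith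
qed

lemma X_bound:
  assumes F: "F \<in> X_space \<alpha>"
  shows "\<bar>(F y :: real^2^2) $ l $ j\<bar> \<le> X_norm \<alpha> F * (1 + norm y) powr (-\<alpha>)"
proof -
  have bdd: "bdd_above (range (\<lambda>x. (1 + norm x) powr \<alpha> * norm (F x)))"
    using F by (simp add: X_space_def)
  have le: "(1 + norm y) powr \<alpha> * norm (F y) \<le> X_norm \<alpha> F"
    unfolding X_norm_def by (rule cSUP_upper[OF _ bdd]) simp
  have p1: "1 + norm y > 0" by (simp add: add_pos_nonneg)
  have pos: "(1 + norm y) powr \<alpha> > 0" using p1 by simp
  have "\<bar>F y $ l $ j\<bar> \<le> norm (F y $ l)" by (rule component_le_norm_cart)
  also have "\<dots> \<le> norm (F y)" by (rule Finite_Cartesian_Product.norm_nth_le)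
  also have "\<dots> \<le> X_norm \<alpha> F / (1 + norm y) powr \<alpha>"
    using le pos by (simp add: le_divide_eq mult.commute)
  also have "\<dots> = X_norm \<alpha> F * (1 + norm y) powr (-\<alpha>)"
    by (simp add: powr_minus_divide)
  finally show ?thesis .
qed

lemma X_norm_nonneg:
  assumes F: "F \<in> X_space \<alpha>"
  shows "X_norm \<alpha> (F :: real^2 \<Rightarrow> real^2^2) \<ge> 0"
proof -
  have bdd: "bdd_above (range (\<lambda>x. (1 + norm x) powr \<alpha> * norm (F x)))"
    using F by (simp add: X_space_def)
  have le: "(1 + norm (0::real^2)) powr \<alpha> * norm (F 0) \<le> X_norm \<alpha> F"
    unfolding X_norm_def by (rule cSUP_upper[OF _ bdd]) simp
  moreover have "(1 + norm (0::real^2)) powr \<alpha> * norm (F 0) \<ge> 0" by simp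
  ultimately show ?thesis by linarith
qed

lemma integrable_nn_bound:
  fixes g :: "real^2 \<Rightarrow> real"
  assumes [measurable]: "g \<in> borel_measurable lborel"
    and B: "(\<integral>\<^sup>+y. ennreal \<bar>g y\<bar> \<partial>lborel) \<le> ennreal B"
  shows "integrable lborel g"
proof (rule integrableI_bounded)
  show "(\<integral>\<^sup>+y. ennreal (norm (g y)) \<partial>lborel) < \<infinity>"
    using B by (simp add: le_less_trans)
qed simp

lemma integrable_decay:
  fixes g :: "real^2 \<Rightarrow> real"
  assumes [measurable]: "g \<in> borel_measurable lborel" and N: "N \<ge> 0" and s: "s > 2"
    and b: "\<And>y. \<bar>g y\<bar> \<le> N * (1 + norm y) powr (-s)"
  shows "integrable lborel g"
proof (rule integrable_nn_bound)
  have "(\<integral>\<^sup>+y. ennreal \<bar>g y\<bar> \<partial>lborel) \<le> (\<integral>\<^sup>+y. ennreal (N * (indicator {0..} (norm (y::real^2)) * (1 + norm y) powr (-s))) \<partial>lborel)"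
  proof (rule nn_integral_mono)
    fix y :: "real^2"
    show "ennreal \<bar>g y\<bar> \<le> ennreal (N * (indicator {0..} (norm y) * (1 + norm y) powr (-s)))"
      using b[of y] by (intro ennreal_leI) (simp add: indicator_def)
  qed
  also have "\<dots> \<le> ennreal (N * (2 * cR * (1 + 0) powr (2 - s) / (s - 2)))"
    using N s by (intro nn_cmult_le L_tail) (auto simp: indicator_def)
  finally show "(\<integral>\<^sup>+y. ennreal \<bar>g y\<bar> \<partial>lborel) \<le> ennreal (N * (2 * cR * (1 + 0) powr (2 - s) / (s - 2)))" .
qed simp

lemma integral_bound_nn:
  fixes g :: "real^2 \<Rightarrow> real"
  assumes "integrable lborel g" and B: "(\<integral>\<^sup>+y. ennreal \<bar>g y\<bar> \<partial>lborel) \<le> ennreal B" and B0: "B \<ge> 0"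
  shows "\<bar>LINT y|lborel. g y\<bar> \<le> B"
proof -
  have "ennreal (norm (LINT y|lborel. g y)) \<le> (\<integral>\<^sup>+y. ennreal (norm (g y)) \<partial>lborel)"
    by (rule integral_norm_bound_ennreal[OF assms(1)])
  also have "\<dots> \<le> ennreal B" using B by simp
  finally have "ennreal \<bar>LINT y|lborel. g y\<bar> \<le> ennreal B" by simp
  then show ?thesis using B0 by (simp add: ennreal_le_iff)
qed

lemma vec_nth_meas1[measurable]: "(\<lambda>v::real^2. v $ i) \<in> borel_measurable borel"
  by (intro borel_measurable_continuous_onI continuous_intros)
lemma vec_nth_meas2[measurable]: "(\<lambda>v::real^2^2. v $ i) \<in> borel_measurable borel"
  by (intro borel_measurable_continuous_onI continuous_intros)

lemma part2_lj:
  fixes F :: "real^2 \<Rightarrow> real^2^2" and x :: "real^2"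
  assumes F: "F \<in> X_space (2 + \<delta>)" and x: "norm x \<ge> exp 1" and d: "0 < \<delta>" "\<delta> < 1"
  shows "\<bar>conv (partial j (GammaS i l)) (\<lambda>y. F y $ l $ j) x - (LINT y|lborel. F y $ l $ j) * partial j (GammaS i l) x\<bar>
     \<le> X_norm (2 + \<delta>) F * (K2 \<delta> * norm x powr -(1+\<delta>))"
proof -
  define N where "N = X_norm (2 + \<delta>) F"
  have N0: "N \<ge> 0" using X_norm_nonneg[OF F] by (simp add: N_def)
  have Fm[measurable]: "F \<in> borel_measurable borel" using F by (simp add: X_space_def)
  have \<phi>m[measurable]: "(\<lambda>y. F y $ l $ j) \<in> borel_measurable lborel" by measurable
  have x0: "x \<noteq> 0" using x e_ge2 by auto
  have b\<phi>: "\<bar>F y $ l $ j\<bar> \<le> N * (1 + norm y) powr (-(2+\<delta>))" for y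
    using X_bound[OF F, of y l j] by (simp add: N_def)
  have int\<phi>: "integrable lborel (\<lambda>y. F y $ l $ j)"
    using d N0 b\<phi> by (intro integrable_decay[where N=N and s="2+\<delta>"]) auto
  define D where "D y = (dG i l j (x - y) - dG i l j x) * F y $ l $ j" for y
  have Dm[measurable]: "D \<in> borel_measurable lborel" unfolding D_def by measurable
  have KD: "K2 \<delta> * norm x powr -(1+\<delta>) \<ge> 0" unfolding K2_def using cR_pos d by simp
  have nnD: "(\<integral>\<^sup>+y. ennreal \<bar>D y\<bar> \<partial>lborel) \<le> ennreal (N * (K2 \<delta> * norm x powr -(1+\<delta>)))"
  proof -
    have "(\<integral>\<^sup>+y. ennreal \<bar>D y\<bar> \<partial>lborel) \<le> (\<integral>\<^sup>+y. ennreal (N * (\<bar>dG i l j (x - y) - dG i l j x\<bar> * (1 + norm y) powr -(2+\<delta>))) \<partial>lborel)"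
    proof (rule nn_integral_mono)
      fix y :: "real^2"
      have "\<bar>D y\<bar> = \<bar>dG i l j (x - y) - dG i l j x\<bar> * \<bar>F y $ l $ j\<bar>" by (simp add: D_def abs_mult)
      also have "\<dots> \<le> \<bar>dG i l j (x - y) - dG i l j x\<bar> * (N * (1 + norm y) powr (-(2+\<delta>)))"
        by (intro mult_left_mono b\<phi>) simp
      finally show "ennreal \<bar>D y\<bar> \<le> ennreal (N * (\<bar>dG i l j (x - y) - dG i l j x\<bar> * (1 + norm y) powr -(2+\<delta>)))"
        by (intro ennreal_leI) (simp add: algebra_simps)
    qed
    also have "\<dots> \<le> ennreal (N * (K2 \<delta> * norm x powr -(1+\<delta>)))"
      using N0 x d by (intro nn_cmult_le Int2) auto
    finally show ?thesis .
  qed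
  have intD: "integrable lborel D" by (rule integrable_nn_bound[OF Dm nnD])
  have "conv (partial j (GammaS i l)) (\<lambda>y. F y $ l $ j) x = (LINT y|lborel. D y + dG i l j x * F y $ l $ j)"
    unfolding conv_def
  proof (rule integral_cong_AE)
    show "AE y in lborel. partial j (GammaS i l) (x - y) * F y $ l $ j = D y + dG i l j x * F y $ l $ j"
      using AE_lborel_singleton[of x]
    proof eventually_elim
      fix y assume "y \<noteq> x"
      then have "x - y \<noteq> 0" by simp
      then show "partial j (GammaS i l) (x - y) * F y $ l $ j = D y + dG i l j x * F y $ l $ j"
        by (simp add: partial_eq D_def algebra_simps)
    qed
  qed measurable
  also have "\<dots> = (LINT y|lborel. D y) + dG i l j x * (LINT y|lborel. F y $ l $ j)"
    using intD int\<phi> by simp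
  finally have eq: "conv (partial j (GammaS i l)) (\<lambda>y. F y $ l $ j) x - (LINT y|lborel. F y $ l $ j) * partial j (GammaS i l) x
      = (LINT y|lborel. D y)" using x0 by (simp add: partial_eq)
  show ?thesis unfolding eq N_def[symmetric]
    by (rule integral_bound_nn[OF intD nnD]) (use N0 KD in simp)
qed

lemma part1_l:
  fixes f :: "real^2 \<Rightarrow> real^2" and x :: "real^2"
  assumes f: "f \<in> Xlog_space (3 + \<delta>)" and x: "norm x \<ge> exp 1" and d: "0 < \<delta>" "\<delta> < 1"
  shows "\<bar>conv (GammaS i l) (\<lambda>y. f y $ l) x - (LINT y|lborel. f y $ l) * GammaS i l x
      + (\<Sum>j\<in>UNIV. (LINT y|lborel. f y $ l * y $ j) * partial j (GammaS i l) x)\<bar>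
     \<le> Xlog_norm (3 + \<delta>) f * (K1 \<delta> * norm x powr -(1+\<delta>))"
proof -
  define N where "N = Xlog_norm (3 + \<delta>) f"
  have N0: "N \<ge> 0" using Xlog_norm_nonneg[OF f] by (simp add: N_def)
  have fm[measurable]: "f \<in> borel_measurable borel" using f by (simp add: Xlog_space_def)
  have \<phi>m[measurable]: "(\<lambda>y. f y $ l) \<in> borel_measurable lborel" by measurable
  have x0: "x \<noteq> 0" using x e_ge2 by auto
  have b\<phi>: "\<bar>f y $ l\<bar> \<le> N * ((1 + norm y) powr (-(3+\<delta>)) / ln (exp 1 + norm y))" for y
    using Xlog_bound[OF f, of y l] by (simp add: N_def)
  have w1: "(1 + norm y) powr (-(3+\<delta>)) / ln (exp 1 + norm y) \<le> (1 + norm y) powr (-(3+\<delta>))" for y :: "real^2"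
  proof -
    have "ln (exp 1 + norm y) \<ge> 1" by (rule ln_e_plus_ge1) simp
    then show ?thesis by (simp add: divide_le_eq mult_le_cancel_left1)
  qed
  have b\<phi>3: "\<bar>f y $ l\<bar> \<le> N * (1 + norm y) powr (-(3+\<delta>))" for y
    using b\<phi>[of y] mult_left_mono[OF w1[of y] N0] by linarith
  have int\<phi>: "integrable lborel (\<lambda>y. f y $ l)"
    using d N0 b\<phi>3 by (intro integrable_decay[where N=N and s="3+\<delta>"]) auto
  have int\<phi>y: "integrable lborel (\<lambda>y. f y $ l * y $ j)" for j
  proof (rule integrable_decay[where N=N and s="2+\<delta>"])
    fix y :: "real^2"
    have "\<bar>f y $ l * y $ j\<bar> \<le> N * (1 + norm y) powr (-(3+\<delta>)) * norm y"
      unfolding abs_mult using b\<phi>3[of y] component_le_norm_cart[of y j] N0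
      by (intro mult_mono) auto
    also have "\<dots> = N * (norm y * (1 + norm y) powr (-(3+\<delta>)))" by simp
    also have "\<dots> \<le> N * (1 + norm y) powr (-(2+\<delta>))"
      using N0 nP3_le[of "norm y" \<delta>] by (intro mult_left_mono) auto
    finally show "\<bar>f y $ l * y $ j\<bar> \<le> N * (1 + norm y) powr (-(2+\<delta>))" .
  qed (use N0 d in auto)
  define T where "T y = GammaS i l (x - y) - GammaS i l x + (\<Sum>j\<in>UNIV. y$j * dG i l j x)" for y
  define D where "D y = T y * f y $ l" for y
  have Dm[measurable]: "D \<in> borel_measurable lborel" unfolding D_def T_def by measurable
  have KD: "K1 \<delta> * norm x powr -(1+\<delta>) \<ge> 0" unfolding K1_def using cR_pos d by simp
  have nnD: "(\<integral>\<^sup>+y. ennreal \<bar>D y\<bar> \<partial>lborel) \<le> ennreal (N * (K1 \<delta> * norm x powr -(1+\<delta>)))"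
  proof -
    have "(\<integral>\<^sup>+y. ennreal \<bar>D y\<bar> \<partial>lborel) \<le> (\<integral>\<^sup>+y. ennreal (N * (\<bar>T y\<bar> * ((1 + norm y) powr -(3+\<delta>) / ln (exp 1 + norm y)))) \<partial>lborel)"
    proof (rule nn_integral_mono)
      fix y :: "real^2"
      have "\<bar>D y\<bar> = \<bar>T y\<bar> * \<bar>f y $ l\<bar>" by (simp add: D_def abs_mult)
      also have "\<dots> \<le> \<bar>T y\<bar> * (N * ((1 + norm y) powr (-(3+\<delta>)) / ln (exp 1 + norm y)))"
        by (intro mult_left_mono b\<phi>) simp
      finally show "ennreal \<bar>D y\<bar> \<le> ennreal (N * (\<bar>T y\<bar> * ((1 + norm y) powr -(3+\<delta>) / ln (exp 1 + norm y))))"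
        by (intro ennreal_leI) (simp add: algebra_simps)
    qed
    also have "\<dots> \<le> ennreal (N * (K1 \<delta> * norm x powr -(1+\<delta>)))"
      unfolding T_def using N0 x d
    proof (intro nn_cmult_le Int1)
      show "0 \<le> \<bar>GammaS i l (x - y) - GammaS i l x + (\<Sum>j\<in>UNIV. y $ j * dG i l j x)\<bar> *
           ((1 + norm y) powr - (3 + \<delta>) / ln (exp 1 + norm y))" for y :: "real^2"
        using ln_e_plus_ge1[of "norm y"] by (intro mult_nonneg_nonneg divide_nonneg_nonneg) auto
    qed (auto)
    finally show ?thesis .
  qed
  have intD: "integrable lborel D" by (rule integrable_nn_bound[OF Dm nnD])
  have pt: "GammaS i l (x - y) * f y $ l = D y + GammaS i l x * f y $ l - (\<Sum>j\<in>UNIV. dG i l j x * (f y $ l * y $ j))" for y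
    by (simp add: D_def T_def algebra_simps sum_distrib_left sum_distrib_right)
  have "conv (GammaS i l) (\<lambda>y. f y $ l) x = (LINT y|lborel. D y + GammaS i l x * f y $ l - (\<Sum>j\<in>UNIV. dG i l j x * (f y $ l * y $ j)))"
    unfolding conv_def pt ..
  also have "\<dots> = (LINT y|lborel. D y) + GammaS i l x * (LINT y|lborel. f y $ l) - (\<Sum>j\<in>UNIV. dG i l j x * (LINT y|lborel. f y $ l * y $ j))"
    using intD int\<phi> int\<phi>y by (simp add: integral_sum)
  finally have eq: "conv (GammaS i l) (\<lambda>y. f y $ l) x - (LINT y|lborel. f y $ l) * GammaS i l x
      + (\<Sum>j\<in>UNIV. (LINT y|lborel. f y $ l * y $ j) * partial j (GammaS i l) x) = (LINT y|lborel. D y)"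
    using x0 by (simp add: partial_eq mult.commute)
  show ?thesis unfolding eq N_def[symmetric]
    by (rule integral_bound_nn[OF intD nnD]) (use N0 KD in simp)
qed

lemma powr_cancel_neg: "(\<rho>::real) > 0 \<Longrightarrow> \<rho> powr a * \<rho> powr (-a) = 1"
  by (simp add: powr_add[symmetric])

lemma final_scale:
  assumes \<rho>: "(\<rho>::real) > 0" and E: "\<bar>E\<bar> \<le> c * (N * (K * \<rho> powr -a))"
  shows "\<rho> powr a * \<bar>E\<bar> \<le> (c * K) * N"
proof -
  have "\<rho> powr a * \<bar>E\<bar> \<le> \<rho> powr a * (c * (N * (K * \<rho> powr -a)))" using E by (intro mult_left_mono) auto
  also have "\<dots> = (c * K) * N * (\<rho> powr a * \<rho> powr -a)" by (simp add: algebra_simps)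
  also have "\<dots> = (c * K) * N" using powr_cancel_neg[OF \<rho>] by simp
  finally show ?thesis .
qed

theorem lemma2p1:
  fixes \<delta> :: real
  assumes "0 < \<delta>" and "\<delta> < 1"
  shows "(\<exists>C>0. \<forall>f :: real^2 \<Rightarrow> real^2. f \<in> Xlog_space (3 + \<delta>) \<longrightarrow>
            (\<forall>i x. norm x \<ge> exp 1 \<longrightarrow>
               norm x powr (1 + \<delta>) *
               \<bar>(\<Sum>l\<in>UNIV. conv (GammaS i l) (\<lambda>y. f y $ l) x)
                 - (\<Sum>l\<in>UNIV. (LINT y|lborel. f y $ l) * GammaS i l x)
                 + (\<Sum>l\<in>UNIV. \<Sum>j\<in>UNIV. (LINT y|lborel. f y $ l * y $ j) * partial j (GammaS i l) x)\<bar>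
               \<le> C * Xlog_norm (3 + \<delta>) f))
       \<and> (\<exists>C'>0. \<forall>F :: real^2 \<Rightarrow> real^2^2. F \<in> X_space (2 + \<delta>) \<longrightarrow>
            (\<forall>i x. norm x \<ge> exp 1 \<longrightarrow>
               norm x powr (1 + \<delta>) *
               \<bar>(\<Sum>l\<in>UNIV. \<Sum>j\<in>UNIV. conv (partial j (GammaS i l)) (\<lambda>y. F y $ l $ j) x)
                 - (\<Sum>l\<in>UNIV. \<Sum>j\<in>UNIV. (LINT y|lborel. F y $ l $ j) * partial j (GammaS i l) x)\<bar>
               \<le> C' * X_norm (2 + \<delta>) F))"
proof (intro conjI)
  have p: "32 / (1 - \<delta>) > 0" "8 / \<delta> > 0" "16 / (1 - \<delta>) > 0" using assms by simp_all
  have S1: "32 / (1 - \<delta>) + 56 + 8 / \<delta> + 16 > 0" using p by linarith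
  have S2: "16 / (1 - \<delta>) + 8 / \<delta> + 16 > 0" using p by linarith
  have K1p: "K1 \<delta> > 0" unfolding K1_def using cR_pos S1 by (rule mult_pos_pos)
  have K2p: "K2 \<delta> > 0" unfolding K2_def using cR_pos S2 by (rule mult_pos_pos)
  show "\<exists>C>0. \<forall>f :: real^2 \<Rightarrow> real^2. f \<in> Xlog_space (3 + \<delta>) \<longrightarrow>
            (\<forall>i x. norm x \<ge> exp 1 \<longrightarrow>
               norm x powr (1 + \<delta>) *
               \<bar>(\<Sum>l\<in>UNIV. conv (GammaS i l) (\<lambda>y. f y $ l) x)
                 - (\<Sum>l\<in>UNIV. (LINT y|lborel. f y $ l) * GammaS i l x)
                 + (\<Sum>l\<in>UNIV. \<Sum>j\<in>UNIV. (LINT y|lborel. f y $ l * y $ j) * partial j (GammaS i l) x)\<bar>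
               \<le> C * Xlog_norm (3 + \<delta>) f)"
  proof (intro exI[of _ "2 * K1 \<delta>"] conjI allI impI)
    show "0 < 2 * K1 \<delta>" using K1p by simp
    fix f :: "real^2 \<Rightarrow> real^2" and i :: 2 and x :: "real^2"
    assume f: "f \<in> Xlog_space (3 + \<delta>)" and x: "exp 1 \<le> norm x"
    let ?B = "Xlog_norm (3 + \<delta>) f * (K1 \<delta> * norm x powr -(1+\<delta>))"
    have "(\<Sum>l\<in>UNIV. conv (GammaS i l) (\<lambda>y. f y $ l) x)
                 - (\<Sum>l\<in>UNIV. (LINT y|lborel. f y $ l) * GammaS i l x)
                 + (\<Sum>l\<in>UNIV. \<Sum>j\<in>UNIV. (LINT y|lborel. f y $ l * y $ j) * partial j (GammaS i l) x)
        = (\<Sum>l\<in>UNIV. conv (GammaS i l) (\<lambda>y. f y $ l) x - (LINT y|lborel. f y $ l) * GammaS i l x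
                 + (\<Sum>j\<in>UNIV. (LINT y|lborel. f y $ l * y $ j) * partial j (GammaS i l) x))"
      by (simp add: sum.distrib sum_subtractf)
    also have "\<bar>\<dots>\<bar> \<le> (\<Sum>l\<in>(UNIV::2 set). ?B)"
      by (rule order_trans[OF sum_abs sum_mono]) (rule part1_l[OF f x assms])
    also have "\<dots> = 2 * ?B" by simp
    finally have E: "\<bar>(\<Sum>l\<in>UNIV. conv (GammaS i l) (\<lambda>y. f y $ l) x)
                 - (\<Sum>l\<in>UNIV. (LINT y|lborel. f y $ l) * GammaS i l x)
                 + (\<Sum>l\<in>UNIV. \<Sum>j\<in>UNIV. (LINT y|lborel. f y $ l * y $ j) * partial j (GammaS i l) x)\<bar> \<le> 2 * ?B" .
    have \<rho>: "norm x > 0" using x e_ge2 by linarith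
    show "norm x powr (1 + \<delta>) *
               \<bar>(\<Sum>l\<in>UNIV. conv (GammaS i l) (\<lambda>y. f y $ l) x)
                 - (\<Sum>l\<in>UNIV. (LINT y|lborel. f y $ l) * GammaS i l x)
                 + (\<Sum>l\<in>UNIV. \<Sum>j\<in>UNIV. (LINT y|lborel. f y $ l * y $ j) * partial j (GammaS i l) x)\<bar>
               \<le> 2 * K1 \<delta> * Xlog_norm (3 + \<delta>) f"
      by (rule final_scale[OF \<rho> E])
  qed
  show "\<exists>C'>0. \<forall>F :: real^2 \<Rightarrow> real^2^2. F \<in> X_space (2 + \<delta>) \<longrightarrow>
            (\<forall>i x. norm x \<ge> exp 1 \<longrightarrow>
               norm x powr (1 + \<delta>) *
               \<bar>(\<Sum>l\<in>UNIV. \<Sum>j\<in>UNIV. conv (partial j (GammaS i l)) (\<lambda>y. F y $ l $ j) x)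
                 - (\<Sum>l\<in>UNIV. \<Sum>j\<in>UNIV. (LINT y|lborel. F y $ l $ j) * partial j (GammaS i l) x)\<bar>
               \<le> C' * X_norm (2 + \<delta>) F)"
  proof (intro exI[of _ "4 * K2 \<delta>"] conjI allI impI)
    show "0 < 4 * K2 \<delta>" using K2p by simp
    fix F :: "real^2 \<Rightarrow> real^2^2" and i :: 2 and x :: "real^2"
    assume F: "F \<in> X_space (2 + \<delta>)" and x: "exp 1 \<le> norm x"
    let ?B = "X_norm (2 + \<delta>) F * (K2 \<delta> * norm x powr -(1+\<delta>))"
    have "(\<Sum>l\<in>UNIV. \<Sum>j\<in>UNIV. conv (partial j (GammaS i l)) (\<lambda>y. F y $ l $ j) x)
                 - (\<Sum>l\<in>UNIV. \<Sum>j\<in>UNIV. (LINT y|lborel. F y $ l $ j) * partial j (GammaS i l) x)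
        = (\<Sum>l\<in>UNIV. \<Sum>j\<in>UNIV. conv (partial j (GammaS i l)) (\<lambda>y. F y $ l $ j) x - (LINT y|lborel. F y $ l $ j) * partial j (GammaS i l) x)"
      by (simp add: sum_subtractf)
    also have "\<bar>\<dots>\<bar> \<le> (\<Sum>l\<in>(UNIV::2 set). \<Sum>j\<in>(UNIV::2 set). ?B)"
    proof (rule order_trans[OF sum_abs sum_mono])
      fix l :: 2
      show "\<bar>\<Sum>j\<in>UNIV. conv (partial j (GammaS i l)) (\<lambda>y. F y $ l $ j) x - (LINT y|lborel. F y $ l $ j) * partial j (GammaS i l) x\<bar>
          \<le> (\<Sum>j\<in>(UNIV::2 set). ?B)"
        by (rule order_trans[OF sum_abs sum_mono]) (rule part2_lj[OF F x assms])
    qed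
    also have "\<dots> = 4 * ?B" by simp
    finally have E: "\<bar>(\<Sum>l\<in>UNIV. \<Sum>j\<in>UNIV. conv (partial j (GammaS i l)) (\<lambda>y. F y $ l $ j) x)
                 - (\<Sum>l\<in>UNIV. \<Sum>j\<in>UNIV. (LINT y|lborel. F y $ l $ j) * partial j (GammaS i l) x)\<bar> \<le> 4 * ?B" .
    have \<rho>: "norm x > 0" using x e_ge2 by linarith
    show "norm x powr (1 + \<delta>) *
               \<bar>(\<Sum>l\<in>UNIV. \<Sum>j\<in>UNIV. conv (partial j (GammaS i l)) (\<lambda>y. F y $ l $ j) x)
                 - (\<Sum>l\<in>UNIV. \<Sum>j\<in>UNIV. (LINT y|lborel. F y $ l $ j) * partial j (GammaS i l) x)\<bar>
               \<le> 4 * K2 \<delta> * X_norm (2 + \<delta>) F"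
      by (rule final_scale[OF \<rho> E])
  qed
qed

end
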